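(* Under the setting below, let $f\in\mathcal{F}$, $0<\epsilon_1\le|\mathcal{U}_A|$, and $\epsilon_{\mathrm{op}}=\alpha\epsilon_1/(4H|\mathcal{U}_A|^2|\mathcal{U}||\mathcal{O}|)$. Suppose $f'=\{m'_{(o,a,u),h},q'_0\}$ is any parameter tuple (not necessarily a valid PSR) with $\max_{o\in\mathcal{O},a\in\mathcal{A},h\in[H-1],u\in\mathcal{U}_{h+1}}\|m_{(o,a,u),h;f}-m'_{(o,a,u),h}\|_\infty\le\epsilon_{\mathrm{op}}$ and $\|q_{0;f}-q'_0\|_\infty\le\epsilon_{\mathrm{op}}$, and define $\mathbb{P}^\pi_{f'}(\tau_H)=e_{o_H}^\top M'_{o_{H-1},a_{H-1},H-1}\cdots M'_{o_1,a_1,1}q'_0\,\pi(\tau_H)$, where $M'_{o,a,h}$ has rows $(m'_{(o,a,u),h})^\top$. Then for every policy $\pi$, $\sum_{\tau_H}|\mathbb{P}^\pi_{f'}(\tau_H)-\mathbb{P}^\pi_f(\tau_H)|\le\epsilon_1$.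
   Context: Process: finite $\mathcal{O},\mathcal{A}$, horizon $H$; histories $\tau_h=(o_1,a_1,\dots,o_h,a_h)$; policies pick $a_h\sim\pi_h(\cdot\mid\tau_{h-1},o_h)$; $\pi(\tau_h)=\prod_{l\le h}\pi_l(a_l\mid\tau_{l-1},o_l)$; $\mathbb{P}^\pi_f(\tau_H)$ is the probability of $\tau_H$ under $\pi$ in model $f$. For a model $f$, a test starting at step $h$ is $t=(o_h,\dots,o_{h+W-1},a_h,\dots,a_{h+W-2})$; $\mathbb{P}_f(t\mid\tau_{h-1})$ is the probability of observing $o_{h:h+W-1}$ when executing $a_{h:h+W-2}$ after $\tau_{h-1}$ ($0$ if unreachable). A set $\mathcal{U}_h$ of tests starting at $h$ is a core test set if for every test $t$ starting at $h$ there is a history-independent $m_{t,h;f}$ with $\mathbb{P}_f(t\mid\tau_{h-1})=\langle m_{t,h;f},q_{\tau_{h-1};f}\rangle$, $q_{\tau_{h-1};f}=[\mathbb{P}_f(u\mid\tau_{h-1})]_{u\in\mathcal{U}_h}$; $q_{0;f}=[\mathbb{P}_f(u)]_{u\in\mathcal{U}_1}$; $M_{o,a,h;f}$ has rows $m_{(o,a,u),h;f}^\top$, $u\in\mathcal{U}_{h+1}$. $\mathcal{U}_{A,h}$: action sequences in $\mathcal{U}_h$; $|\mathcal{U}_A|=\max_h|\mathcal{U}_{A,h}|$; $|\mathcal{U}|=\max_h|\mathcal{U}_h|$. $d_{\mathrm{PSR},h;f}$ is the rank of the matrix with entries $\mathbb{P}_f(t\mid\tau_h)$. Core matrix $K_{h;f}$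 ($h\ge1$): columns $q_{\tau_h^1;f},\dots,q_{\tau_h^{d_{\mathrm{PSR},h;f}};f}$ for histories whose predictive states span all $q_{\tau_h;f}$, chosen to minimize $\|K_{h;f}^\dagger\|_{1\to1}$; $K_{0;f}=q_{0;f}$. Standing assumptions: every $f\in\mathcal{F}$ is a valid PSR with core test sets $\{\mathcal{U}_h\}_{h\in[H]}$ and $\|K_{h;f}^\dagger\|_{1\to1}\le1/\alpha$ for $h\in\{0,\dots,H-1\}$; every $o\in\mathcal{O}$ belongs to $\mathcal{U}_H$ and $m_{o,H;f}=e_o$ (standard basis vector indexing $o$ in $\mathcal{U}_H$). Convention: for $f\in\mathcal{F}$ the vectors $m_{(o,a,u),h;f}$ lie in the column space of $K_{h-1;f}$. *)

theory Defs
  imports Complex_Main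
begin

text \<open>Histories tau_h = (o_1,a_1,...,o_h,a_h) are lists of observation/action pairs.
A test (o_h,...,o_{h+W-1}, a_h,...,a_{h+W-2}) is a pair (list of (o,a) pairs of length W-1,
final observation).\<close>

type_synonym ('o,'a) hist = "('o \<times> 'a) list"
type_synonym ('o,'a) test = "('o \<times> 'a) list \<times> 'o"

text \<open>A model f is given by its observation kernel: f tau o is the probability of the next
observation o after history tau.\<close>

definition valid_model :: "nat \<Rightarrow> (('o::finite,'a) hist \<Rightarrow> 'o \<Rightarrow> real) \<Rightarrow> bool" where
  "valid_model H f \<longleftrightarrow>
     (\<forall>\<tau> ob. length \<tau> < H \<longrightarrow> 0 \<le> f \<tau> ob) \<and>
     (\<forall>\<tau>. length \<tau> < H \<longrightarrow> (\<Sum>ob\<in>UNIV. f \<tau> ob) = 1)"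

definition obs_prod :: "(('o,'a) hist \<Rightarrow> 'o \<Rightarrow> real) \<Rightarrow> ('o,'a) hist \<Rightarrow> ('o,'a) hist \<Rightarrow> real" where
  "obs_prod f \<tau> ps = (\<Prod>l<length ps. f (\<tau> @ take l ps) (fst (ps ! l)))"

definition reach_prob :: "(('o,'a) hist \<Rightarrow> 'o \<Rightarrow> real) \<Rightarrow> ('o,'a) hist \<Rightarrow> real" where
  "reach_prob f \<tau> = obs_prod f [] \<tau>"

text \<open>P_f(t | tau), equal to 0 if tau is unreachable.\<close>
definition test_prob :: "(('o,'a) hist \<Rightarrow> 'o \<Rightarrow> real) \<Rightarrow> ('o,'a) hist \<Rightarrow> ('o,'a) test \<Rightarrow> real" where
  "test_prob f \<tau> t =
     (if reach_prob f \<tau> = 0 then 0 else obs_prod f \<tau> (fst t) * f (\<tau> @ fst t) (snd t))"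

definition tests_from :: "nat \<Rightarrow> nat \<Rightarrow> ('o,'a) test set" where
  "tests_from H h = {t. h + length (fst t) \<le> H}"

definition core_test_set ::
  "nat \<Rightarrow> (('o,'a) hist \<Rightarrow> 'o \<Rightarrow> real) \<Rightarrow> nat \<Rightarrow> ('o,'a) test set \<Rightarrow> bool" where
  "core_test_set H f h Uh \<longleftrightarrow> Uh \<subseteq> tests_from H h \<and>
     (\<forall>t\<in>tests_from H h. \<exists>m. \<forall>\<tau>. length \<tau> = h - 1 \<longrightarrow>
        test_prob f \<tau> t = (\<Sum>u\<in>Uh. m u * test_prob f \<tau> u))"

definition valid_psr ::
  "nat \<Rightarrow> (nat \<Rightarrow> ('o::finite,'a) test set) \<Rightarrow> (('o,'a) hist \<Rightarrow> 'o \<Rightarrow> real) \<Rightarrow> bool" where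
  "valid_psr H U f \<longleftrightarrow> valid_model H f \<and> (\<forall>h\<in>{1..H}. core_test_set H f h (U h))"

text \<open>Policies: pi tau o a = pi_h(a | tau_{h-1}, o_h) with h = length tau + 1.\<close>
definition valid_policy :: "nat \<Rightarrow> (('o,'a::finite) hist \<Rightarrow> 'o \<Rightarrow> 'a \<Rightarrow> real) \<Rightarrow> bool" where
  "valid_policy H \<pi> \<longleftrightarrow>
     (\<forall>\<tau> ob a. length \<tau> < H \<longrightarrow> 0 \<le> \<pi> \<tau> ob a) \<and>
     (\<forall>\<tau> ob. length \<tau> < H \<longrightarrow> (\<Sum>a\<in>UNIV. \<pi> \<tau> ob a) = 1)"

definition policy_prob :: "(('o,'a) hist \<Rightarrow> 'o \<Rightarrow> 'a \<Rightarrow> real) \<Rightarrow> ('o,'a) hist \<Rightarrow> real" where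
  "policy_prob \<pi> \<tau> = (\<Prod>l<length \<tau>. \<pi> (take l \<tau>) (fst (\<tau> ! l)) (snd (\<tau> ! l)))"

definition traj_prob ::
  "(('o,'a) hist \<Rightarrow> 'o \<Rightarrow> real) \<Rightarrow> (('o,'a) hist \<Rightarrow> 'o \<Rightarrow> 'a \<Rightarrow> real) \<Rightarrow> ('o,'a) hist \<Rightarrow> real" where
  "traj_prob f \<pi> \<tau> = reach_prob f \<tau> * policy_prob \<pi> \<tau>"

text \<open>d_PSR,h: (column) rank of the matrix [P_f(t | tau_h)] with rows the tests t starting at
step h+1 and columns the histories tau_h.\<close>
definition cols_indep :: "nat \<Rightarrow> (('o,'a) hist \<Rightarrow> 'o \<Rightarrow> real) \<Rightarrow> nat \<Rightarrow> ('o,'a) hist set \<Rightarrow> bool" where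
  "cols_indep H f h S \<longleftrightarrow>
     (\<forall>c. (\<forall>t\<in>tests_from H (Suc h). (\<Sum>\<tau>\<in>S. c \<tau> * test_prob f \<tau> t) = 0) \<longrightarrow> (\<forall>\<tau>\<in>S. c \<tau> = 0))"

definition dPSR :: "nat \<Rightarrow> (('o,'a) hist \<Rightarrow> 'o \<Rightarrow> real) \<Rightarrow> nat \<Rightarrow> nat" where
  "dPSR H f h = Max {card S | S. S \<subseteq> {\<tau>. length \<tau> = h} \<and> cols_indep H f h S}"

text \<open>Admissible column histories of a core matrix K_h (h >= 1): d_PSR,h histories of length h
whose predictive states span all predictive states; K_0 = q_0 (the single empty history).\<close>
definition core_matrix_hists ::
  "nat \<Rightarrow> (nat \<Rightarrow> ('o,'a) test set) \<Rightarrow> (('o,'a) hist \<Rightarrow> 'o \<Rightarrow> real) \<Rightarrow> nat \<Rightarrow> ('o,'a) hist list \<Rightarrow> bool" where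
  "core_matrix_hists H U f h ks \<longleftrightarrow>
     (if h = 0 then ks = [[]]
      else length ks = dPSR H f h \<and> (\<forall>\<tau>\<in>set ks. length \<tau> = h) \<and>
        (\<forall>\<tau>. length \<tau> = h \<longrightarrow> (\<exists>c. \<forall>u\<in>U (Suc h).
            test_prob f \<tau> u = (\<Sum>i<length ks. c i * test_prob f (ks ! i) u))))"

definition core_mat :: "(('o,'a) hist \<Rightarrow> 'o \<Rightarrow> real) \<Rightarrow> ('o,'a) hist list \<Rightarrow> ('o,'a) test \<Rightarrow> nat \<Rightarrow> real" where
  "core_mat f ks = (\<lambda>u i. test_prob f (ks ! i) u)"

text \<open>X (d x U) is the Moore-Penrose pseudo-inverse of K (U x d): the four Penrose equations.\<close>
definition is_mp_pinv :: "'u set \<Rightarrow> nat \<Rightarrow> ('u \<Rightarrow> nat \<Rightarrow> real) \<Rightarrow> (nat \<Rightarrow> 'u \<Rightarrow> real) \<Rightarrow> bool" where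
  "is_mp_pinv U d K X \<longleftrightarrow>
     (\<forall>u\<in>U. \<forall>j<d. (\<Sum>i<d. K u i * (\<Sum>v\<in>U. X i v * K v j)) = K u j) \<and>
     (\<forall>i<d. \<forall>v\<in>U. (\<Sum>w\<in>U. X i w * (\<Sum>j<d. K w j * X j v)) = X i v) \<and>
     (\<forall>u\<in>U. \<forall>v\<in>U. (\<Sum>i<d. K u i * X i v) = (\<Sum>i<d. K v i * X i u)) \<and>
     (\<forall>i<d. \<forall>j<d. (\<Sum>v\<in>U. X i v * K v j) = (\<Sum>v\<in>U. X j v * K v i))"

text \<open>1->1 operator norm of a d x U matrix: maximum absolute column sum.\<close>
definition norm_1_1 :: "'u set \<Rightarrow> nat \<Rightarrow> (nat \<Rightarrow> 'u \<Rightarrow> real) \<Rightarrow> real" where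
  "norm_1_1 U d X = (if U = {} then 0 else Max ((\<lambda>v. \<Sum>i<d. \<bar>X i v\<bar>) ` U))"

text \<open>||K_{h;f}^dagger||_{1->1} <= 1/alpha for h = 0..H-1, where K_{h;f} is the admissible choice
minimising this norm (equivalently: some admissible choice achieves the bound).\<close>
definition core_bound ::
  "nat \<Rightarrow> (nat \<Rightarrow> ('o,'a) test set) \<Rightarrow> (('o,'a) hist \<Rightarrow> 'o \<Rightarrow> real) \<Rightarrow> real \<Rightarrow> bool" where
  "core_bound H U f \<alpha> \<longleftrightarrow> (\<forall>h\<in>{0..<H}. \<exists>ks X.
      core_matrix_hists H U f h ks \<and>
      is_mp_pinv (U (Suc h)) (length ks) (core_mat f ks) X \<and>
      norm_1_1 (U (Suc h)) (length ks) X \<le> 1 / \<alpha>)"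

definition UA_card :: "nat \<Rightarrow> (nat \<Rightarrow> ('o,'a) test set) \<Rightarrow> nat" where
  "UA_card H U = Max ((\<lambda>h. card ((\<lambda>t. map snd (fst t)) ` U h)) ` {1..H})"

definition U_card :: "nat \<Rightarrow> (nat \<Rightarrow> ('o,'a) test set) \<Rightarrow> nat" where
  "U_card H U = Max ((\<lambda>h. card (U h)) ` {1..H})"

text \<open>The vector M'_{o_n,a_n,n} ... M'_{o_1,a_1,1} q'_0 (indexed by U_{n+1}); m' n o a u v is the
v-entry of m'_{(o,a,u),n}.\<close>
primrec pvec ::
  "(nat \<Rightarrow> 'o \<Rightarrow> 'a \<Rightarrow> ('o,'a) test \<Rightarrow> ('o,'a) test \<Rightarrow> real) \<Rightarrow> (('o,'a) test \<Rightarrow> real) \<Rightarrow>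
   (nat \<Rightarrow> ('o,'a) test set) \<Rightarrow> ('o,'a) hist \<Rightarrow> nat \<Rightarrow> ('o,'a) test \<Rightarrow> real" where
  "pvec m' q0' U \<tau> 0 = q0'"
| "pvec m' q0' U \<tau> (Suc n) =
     (\<lambda>u. \<Sum>v\<in>U (Suc n). m' (Suc n) (fst (\<tau> ! n)) (snd (\<tau> ! n)) u v * pvec m' q0' U \<tau> n v)"

definition traj_prob_param ::
  "nat \<Rightarrow> (nat \<Rightarrow> ('o,'a) test set) \<Rightarrow> (nat \<Rightarrow> 'o \<Rightarrow> 'a \<Rightarrow> ('o,'a) test \<Rightarrow> ('o,'a) test \<Rightarrow> real) \<Rightarrow>
   (('o,'a) test \<Rightarrow> real) \<Rightarrow> (('o,'a) hist \<Rightarrow> 'o \<Rightarrow> 'a \<Rightarrow> real) \<Rightarrow> ('o,'a) hist \<Rightarrow> real" where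
  "traj_prob_param H U m' q0' \<pi> \<tau> =
     pvec m' q0' U \<tau> (H - 1) ([], fst (\<tau> ! (H - 1))) * policy_prob \<pi> \<tau>"

end

theory Submission
  imports Defs
begin


lemma obs_prod_Nil[simp]: "obs_prod f \<tau> [] = 1"
  by (simp add: obs_prod_def)

lemma obs_prod_Cons: "obs_prod f \<tau> (p#ps) = f \<tau> (fst p) * obs_prod f (\<tau>@[p]) ps"
  unfolding obs_prod_def by (simp add: prod.lessThan_Suc_shift del: prod.lessThan_Suc)

lemma obs_prod_append: "obs_prod f \<tau> (\<sigma>@\<rho>) = obs_prod f \<tau> \<sigma> * obs_prod f (\<tau>@\<sigma>) \<rho>"
  by (induct \<sigma> arbitrary: \<tau>) (simp_all add: obs_prod_Cons)

lemma obs_prod_snoc: "obs_prod f \<tau> (\<sigma>@[p]) = obs_prod f \<tau> \<sigma> * f (\<tau>@\<sigma>) (fst p)"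
  by (simp add: obs_prod_append obs_prod_Cons)

lemma reach_append: "reach_prob f (\<sigma>@\<rho>) = reach_prob f \<sigma> * obs_prod f \<sigma> \<rho>"
  by (simp add: reach_prob_def obs_prod_append)

lemma reach_Nil[simp]: "reach_prob f [] = 1"
  by (simp add: reach_prob_def)

definition polw :: "(('o,'a) hist \<Rightarrow> 'o \<Rightarrow> 'a \<Rightarrow> real) \<Rightarrow> ('o,'a) hist \<Rightarrow> ('o,'a) hist \<Rightarrow> real" where
  "polw \<pi> \<rho> \<sigma> = (\<Prod>l<length \<sigma>. \<pi> (\<rho> @ take l \<sigma>) (fst (\<sigma> ! l)) (snd (\<sigma> ! l)))"

lemma polw_Nil[simp]: "polw \<pi> \<rho> [] = 1"
  by (simp add: polw_def)

lemma polw_Cons: "polw \<pi> \<rho> (p#ps) = \<pi> \<rho> (fst p) (snd p) * polw \<pi> (\<rho>@[p]) ps"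
  unfolding polw_def by (simp add: prod.lessThan_Suc_shift del: prod.lessThan_Suc)

lemma polw_append: "polw \<pi> \<rho> (\<sigma>@\<sigma>') = polw \<pi> \<rho> \<sigma> * polw \<pi> (\<rho>@\<sigma>) \<sigma>'"
  by (induct \<sigma> arbitrary: \<rho>) (simp_all add: polw_Cons)

lemma polw_snoc: "polw \<pi> \<rho> (\<sigma>@[p]) = polw \<pi> \<rho> \<sigma> * \<pi> (\<rho>@\<sigma>) (fst p) (snd p)"
  by (simp add: polw_append polw_Cons)

lemma policy_prob_polw: "policy_prob \<pi> \<tau> = polw \<pi> [] \<tau>"
  by (simp add: policy_prob_def polw_def)

lemma finite_len: "finite {\<sigma>::('o::finite \<times> 'a::finite) list. length \<sigma> = n}"
  using finite_lists_length_eq[OF finite_UNIV[where 'a="'o \<times> 'a"], of n] by simp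

lemma sum_len_Suc:
  "(\<Sum>\<sigma>\<in>{\<sigma>::('o::finite \<times> 'a::finite) list. length \<sigma> = Suc n}. F \<sigma>) =
   (\<Sum>\<sigma>\<in>{\<sigma>. length \<sigma> = n}. \<Sum>ob\<in>UNIV. \<Sum>a\<in>UNIV. F (\<sigma>@[(ob,a)]))"
proof -
  have eq: "{\<sigma>::('o \<times> 'a) list. length \<sigma> = Suc n} = (\<lambda>(\<sigma>,p). \<sigma>@[p]) ` ({\<sigma>. length \<sigma> = n} \<times> UNIV)"
  proof (rule set_eqI, rule iffI)
    fix x :: "('o \<times> 'a) list" assume "x \<in> {\<sigma>. length \<sigma> = Suc n}"
    then have "x = butlast x @ [last x]" "length (butlast x) = n"
      by (auto intro: append_butlast_last_id[symmetric])
    then show "x \<in> (\<lambda>(\<sigma>,p). \<sigma>@[p]) ` ({\<sigma>. length \<sigma> = n} \<times> UNIV)"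
      by (intro image_eqI[where x="(butlast x, last x)"]) auto
  qed auto
  have inj: "inj_on (\<lambda>(\<sigma>,p). \<sigma>@[p]) ({\<sigma>::('o \<times> 'a) list. length \<sigma> = n} \<times> UNIV)"
    by (auto simp: inj_on_def)
  have "(\<Sum>\<sigma>\<in>{\<sigma>::('o \<times> 'a) list. length \<sigma> = Suc n}. F \<sigma>) =
        (\<Sum>x\<in>{\<sigma>. length \<sigma> = n} \<times> UNIV. F (fst x @ [snd x]))"
    unfolding eq by (subst sum.reindex[OF inj]) (simp add: case_prod_beta)
  also have "\<dots> = (\<Sum>\<sigma>\<in>{\<sigma>. length \<sigma> = n}. \<Sum>p\<in>UNIV. F (\<sigma>@[p]))"
    by (simp add: sum.cartesian_product split_beta)
  also have "\<dots> = (\<Sum>\<sigma>\<in>{\<sigma>. length \<sigma> = n}. \<Sum>ob\<in>UNIV. \<Sum>a\<in>UNIV. F (\<sigma>@[(ob,a)]))"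
    by (simp add: sum.cartesian_product UNIV_Times_UNIV[symmetric] del: UNIV_Times_UNIV)
  finally show ?thesis .
qed

lemma sum_len_add:
  "(\<Sum>\<tau>\<in>{\<tau>::('o::finite \<times> 'a::finite) list. length \<tau> = a + b}. F \<tau>) =
   (\<Sum>\<rho>\<in>{\<rho>. length \<rho> = a}. \<Sum>\<sigma>\<in>{\<sigma>. length \<sigma> = b}. F (\<rho>@\<sigma>))"
proof -
  have eq: "{\<tau>::('o \<times> 'a) list. length \<tau> = a + b} = (\<lambda>(\<rho>,\<sigma>). \<rho>@\<sigma>) ` ({\<rho>. length \<rho> = a} \<times> {\<sigma>. length \<sigma> = b})"
  proof (rule set_eqI, rule iffI)
    fix x :: "('o \<times> 'a) list" assume "x \<in> {\<tau>. length \<tau> = a + b}"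
    then show "x \<in> (\<lambda>(\<rho>,\<sigma>). \<rho>@\<sigma>) ` ({\<rho>. length \<rho> = a} \<times> {\<sigma>. length \<sigma> = b})"
      by (intro image_eqI[where x="(take a x, drop a x)"]) auto
  qed auto
  have inj: "inj_on (\<lambda>(\<rho>,\<sigma>). \<rho>@\<sigma>) ({\<rho>::('o \<times> 'a) list. length \<rho> = a} \<times> {\<sigma>. length \<sigma> = b})"
    by (auto simp: inj_on_def)
  show ?thesis
    unfolding eq by (subst sum.reindex[OF inj]) (simp add: sum.cartesian_product split_beta)
qed

lemma obs_nonneg: "valid_model H f \<Longrightarrow> length \<tau> + length \<sigma> \<le> H \<Longrightarrow> 0 \<le> obs_prod f \<tau> \<sigma>"
proof (induct \<sigma> arbitrary: \<tau>)
  case (Cons p ps)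
  then show ?case unfolding obs_prod_Cons valid_model_def
    by (intro mult_nonneg_nonneg) auto
qed simp

lemma polw_nonneg: "valid_policy H \<pi> \<Longrightarrow> length \<rho> + length \<sigma> \<le> H \<Longrightarrow> 0 \<le> polw \<pi> \<rho> \<sigma>"
proof (induct \<sigma> arbitrary: \<rho>)
  case (Cons p ps)
  then show ?case unfolding polw_Cons valid_policy_def
    by (intro mult_nonneg_nonneg) auto
qed simp

lemma reach_nonneg: "valid_model H f \<Longrightarrow> length \<sigma> \<le> H \<Longrightarrow> 0 \<le> reach_prob f \<sigma>"
  unfolding reach_prob_def by (rule obs_nonneg) auto

lemma tp_nonneg: "valid_model H f \<Longrightarrow> length \<tau> + length (fst u) < H \<Longrightarrow> 0 \<le> test_prob f \<tau> u"
  unfolding test_prob_def using obs_nonneg[of H f \<tau> "fst u"]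
  by (auto simp: valid_model_def intro!: mult_nonneg_nonneg)

lemma sum_one:
  fixes f :: "('o::finite,'a::finite) hist \<Rightarrow> 'o \<Rightarrow> real"
  assumes vm: "valid_model H f" and vp: "valid_policy H \<pi>"
  shows "length \<tau> + n \<le> H \<Longrightarrow> length \<rho> + n \<le> H \<Longrightarrow>
    (\<Sum>\<sigma>\<in>{\<sigma>. length \<sigma> = n}. polw \<pi> \<rho> \<sigma> * obs_prod f \<tau> \<sigma>) = 1"
proof (induct n)
  case 0
  then show ?case by simp
next
  case (Suc n)
  have "(\<Sum>\<sigma>\<in>{\<sigma>. length \<sigma> = Suc n}. polw \<pi> \<rho> \<sigma> * obs_prod f \<tau> \<sigma>) =
    (\<Sum>\<sigma>\<in>{\<sigma>. length \<sigma> = n}. polw \<pi> \<rho> \<sigma> * obs_prod f \<tau> \<sigma> *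
       (\<Sum>ob\<in>UNIV. f (\<tau>@\<sigma>) ob * (\<Sum>a\<in>UNIV. \<pi> (\<rho>@\<sigma>) ob a)))"
    unfolding sum_len_Suc
    by (intro sum.cong refl) (simp add: polw_snoc obs_prod_snoc sum_distrib_left sum_distrib_right mult_ac)
  also have "\<dots> = (\<Sum>\<sigma>\<in>{\<sigma>. length \<sigma> = n}. polw \<pi> \<rho> \<sigma> * obs_prod f \<tau> \<sigma>)"
  proof (intro sum.cong refl)
    fix \<sigma> :: "('o \<times> 'a) list" assume "\<sigma> \<in> {\<sigma>. length \<sigma> = n}"
    then have l: "length (\<rho>@\<sigma>) < H" "length (\<tau>@\<sigma>) < H" using Suc.prems by auto
    then have "(\<Sum>ob\<in>UNIV. f (\<tau>@\<sigma>) ob * (\<Sum>a\<in>UNIV. \<pi> (\<rho>@\<sigma>) ob a)) = 1"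
      using vm vp unfolding valid_model_def valid_policy_def by simp
    then show "polw \<pi> \<rho> \<sigma> * obs_prod f \<tau> \<sigma> * (\<Sum>ob\<in>UNIV. f (\<tau>@\<sigma>) ob * (\<Sum>a\<in>UNIV. \<pi> (\<rho>@\<sigma>) ob a))
       = polw \<pi> \<rho> \<sigma> * obs_prod f \<tau> \<sigma>" by simp
  qed
  also have "\<dots> = 1" using Suc by simp
  finally show ?case .
qed

lemma finite_acts: "finite {\<sigma>::('o::finite \<times> 'a::finite) list. map snd \<sigma> = A}"
  by (rule finite_subset[OF _ finite_len[of "length A"]]) auto

lemma sum_acts:
  fixes f :: "('o::finite,'a::finite) hist \<Rightarrow> 'o \<Rightarrow> real"
  assumes vm: "valid_model H f"
  shows "length \<tau> + length A \<le> H \<Longrightarrow> (\<Sum>\<sigma>\<in>{\<sigma>. map snd \<sigma> = A}. obs_prod f \<tau> \<sigma>) = 1"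
proof (induct A rule: rev_induct)
  case Nil
  then show ?case by simp
next
  case (snoc a A)
  have eq: "{\<sigma>::('o \<times> 'a) list. map snd \<sigma> = A@[a]} = (\<lambda>(\<sigma>,ob). \<sigma>@[(ob,a)]) ` ({\<sigma>. map snd \<sigma> = A} \<times> UNIV)"
  proof (rule set_eqI, rule iffI)
    fix x :: "('o \<times> 'a) list" assume "x \<in> {\<sigma>. map snd \<sigma> = A@[a]}"
    then have x: "map snd x = A@[a]" by simp
    then have ne: "x \<noteq> []" by auto
    then have "x = butlast x @ [last x]" by simp
    with x have "map snd (butlast x) = A" "snd (last x) = a"
      by (metis butlast_snoc map_butlast, metis last_map last_snoc ne)
    then show "x \<in> (\<lambda>(\<sigma>,ob). \<sigma>@[(ob,a)]) ` ({\<sigma>. map snd \<sigma> = A} \<times> UNIV)"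
      using \<open>x = butlast x @ [last x]\<close>
      by (intro image_eqI[where x="(butlast x, fst (last x))"]) auto
  qed auto
  have inj: "inj_on (\<lambda>(\<sigma>,ob). \<sigma>@[(ob,a)]) ({\<sigma>::('o \<times> 'a) list. map snd \<sigma> = A} \<times> UNIV)"
    by (auto simp: inj_on_def)
  have "(\<Sum>\<sigma>\<in>{\<sigma>. map snd \<sigma> = A@[a]}. obs_prod f \<tau> \<sigma>) =
     (\<Sum>\<sigma>\<in>{\<sigma>. map snd \<sigma> = A}. \<Sum>ob\<in>UNIV. obs_prod f \<tau> (\<sigma>@[(ob,a)]))"
    unfolding eq by (subst sum.reindex[OF inj]) (simp add: sum.cartesian_product split_beta)
  also have "\<dots> = (\<Sum>\<sigma>\<in>{\<sigma>. map snd \<sigma> = A}. obs_prod f \<tau> \<sigma> * (\<Sum>ob\<in>UNIV. f (\<tau>@\<sigma>) ob))"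
    by (simp add: obs_prod_snoc sum_distrib_left)
  also have "\<dots> = (\<Sum>\<sigma>\<in>{\<sigma>. map snd \<sigma> = A}. obs_prod f \<tau> \<sigma>)"
  proof (intro sum.cong refl)
    fix \<sigma> :: "('o \<times> 'a) list" assume "\<sigma> \<in> {\<sigma>. map snd \<sigma> = A}"
    then have "length \<sigma> = length A" by (metis length_map mem_Collect_eq)
    then have "length (\<tau>@\<sigma>) < H" using snoc.prems by auto
    then show "obs_prod f \<tau> \<sigma> * (\<Sum>ob\<in>UNIV. f (\<tau>@\<sigma>) ob) = obs_prod f \<tau> \<sigma>"
      using vm unfolding valid_model_def by simp
  qed
  also have "\<dots> = 1" using snoc by simp
  finally show ?case .
qed

definition acts :: "('o,'a) test \<Rightarrow> 'a list" where "acts t = map snd (fst t)"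

lemma tp_sum_UA:
  fixes f :: "('o::finite,'a::finite) hist \<Rightarrow> 'o \<Rightarrow> real"
  assumes vm: "valid_model H f" and lt: "length \<tau> = k" and sub: "Uk \<subseteq> tests_from H (Suc k)"
    and fin: "finite Uk"
  shows "(\<Sum>u\<in>Uk. \<bar>test_prob f \<tau> u\<bar>) \<le> card (acts ` Uk)"
proof -
  have nn: "\<And>u. u \<in> Uk \<Longrightarrow> 0 \<le> test_prob f \<tau> u"
    using sub lt by (intro tp_nonneg[OF vm]) (auto simp: tests_from_def)
  have "(\<Sum>u\<in>Uk. \<bar>test_prob f \<tau> u\<bar>) = (\<Sum>u\<in>Uk. test_prob f \<tau> u)"
    using nn by simp
  also have "\<dots> = (\<Sum>A\<in>acts ` Uk. \<Sum>u\<in>{u. u \<in> Uk \<and> acts u = A}. test_prob f \<tau> u)"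
    by (rule sum.group[symmetric]) (use fin in auto)
  also have "\<dots> \<le> (\<Sum>A\<in>acts ` Uk. 1)"
  proof (rule sum_mono)
    fix A assume A: "A \<in> acts ` Uk"
    then obtain u0 where u0: "u0 \<in> Uk" "A = acts u0" by auto
    then have lA: "length \<tau> + length A < H" using sub lt by (auto simp: tests_from_def acts_def)
    have finB: "finite ({\<sigma>::('o \<times> 'a) list. map snd \<sigma> = A} \<times> (UNIV :: 'o set))"
      by (intro finite_cartesian_product finite_acts finite_UNIV)
    have "(\<Sum>u\<in>{u. u \<in> Uk \<and> acts u = A}. test_prob f \<tau> u) \<le>
        (\<Sum>u\<in>{\<sigma>. map snd \<sigma> = A} \<times> UNIV. test_prob f \<tau> u)"
    proof (rule sum_mono2[OF finB])
      show "{u. u \<in> Uk \<and> acts u = A} \<subseteq> {\<sigma>. map snd \<sigma> = A} \<times> UNIV"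
        by (auto simp: acts_def)
      fix u assume "u \<in> {\<sigma>. map snd \<sigma> = A} \<times> UNIV - {u. u \<in> Uk \<and> acts u = A}"
      then have "length (fst u) = length A" by (auto dest: arg_cong[where f=length])
      then show "0 \<le> test_prob f \<tau> u" using lA by (intro tp_nonneg[OF vm]) auto
    qed
    also have "\<dots> = (\<Sum>\<sigma>\<in>{\<sigma>. map snd \<sigma> = A}. \<Sum>ob\<in>UNIV. test_prob f \<tau> (\<sigma>, ob))"
      by (simp add: sum.cartesian_product)
    also have "\<dots> = (if reach_prob f \<tau> = 0 then 0 else
        (\<Sum>\<sigma>\<in>{\<sigma>. map snd \<sigma> = A}. obs_prod f \<tau> \<sigma> * (\<Sum>ob\<in>UNIV. f (\<tau>@\<sigma>) ob)))"
      by (simp add: test_prob_def sum_distrib_left)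
    also have "\<dots> = (if reach_prob f \<tau> = 0 then 0 else
        (\<Sum>\<sigma>\<in>{\<sigma>. map snd \<sigma> = A}. obs_prod f \<tau> \<sigma>))"
    proof -
      have "(\<Sum>\<sigma>\<in>{\<sigma>. map snd \<sigma> = A}. obs_prod f \<tau> \<sigma> * (\<Sum>ob\<in>UNIV. f (\<tau>@\<sigma>) ob)) =
            (\<Sum>\<sigma>\<in>{\<sigma>. map snd \<sigma> = A}. obs_prod f \<tau> \<sigma>)"
      proof (intro sum.cong refl)
        fix \<sigma> :: "('o \<times> 'a) list" assume "\<sigma> \<in> {\<sigma>. map snd \<sigma> = A}"
        then have "length \<sigma> = length A" by (metis length_map mem_Collect_eq)
        then have "length (\<tau>@\<sigma>) < H" using lA by auto
        then show "obs_prod f \<tau> \<sigma> * (\<Sum>ob\<in>UNIV. f (\<tau>@\<sigma>) ob) = obs_prod f \<tau> \<sigma>"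
          using vm unfolding valid_model_def by simp
      qed
      then show ?thesis by simp
    qed
    also have "\<dots> \<le> 1" using sum_acts[OF vm, of \<tau> A] lA by simp
    finally show "(\<Sum>u\<in>{u. u \<in> Uk \<and> acts u = A}. test_prob f \<tau> u) \<le> 1" .
  qed
  also have "\<dots> = card (acts ` Uk)" by simp
  finally show ?thesis .
qed

definition Mop :: "(nat \<Rightarrow> 'o \<Rightarrow> 'a \<Rightarrow> ('o,'a) test \<Rightarrow> ('o,'a) test \<Rightarrow> real) \<Rightarrow>
   (nat \<Rightarrow> ('o,'a) test set) \<Rightarrow> nat \<Rightarrow> 'o \<Rightarrow> 'a \<Rightarrow> (('o,'a) test \<Rightarrow> real) \<Rightarrow> ('o,'a) test \<Rightarrow> real" where
  "Mop m U j ob a y = (\<lambda>u. \<Sum>v\<in>U j. m j ob a u v * y v)"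

fun app :: "(nat \<Rightarrow> 'o \<Rightarrow> 'a \<Rightarrow> ('o,'a) test \<Rightarrow> ('o,'a) test \<Rightarrow> real) \<Rightarrow>
   (nat \<Rightarrow> ('o,'a) test set) \<Rightarrow> nat \<Rightarrow> ('o,'a) hist \<Rightarrow> (('o,'a) test \<Rightarrow> real) \<Rightarrow> ('o,'a) test \<Rightarrow> real" where
  "app m U j [] y = y"
| "app m U j (p#\<sigma>) y = app m U (Suc j) \<sigma> (Mop m U (Suc j) (fst p) (snd p) y)"

lemma app_snoc: "app m U j (\<sigma>@[p]) y = Mop m U (Suc (j + length \<sigma>)) (fst p) (snd p) (app m U j \<sigma> y)"
  by (induct \<sigma> arbitrary: j y) simp_all

lemma pvec_app: "n \<le> length \<tau> \<Longrightarrow> pvec m' q0' U \<tau> n = app m' U 0 (take n \<tau>) q0'"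
proof (induct n)
  case (Suc n)
  then have "take (Suc n) \<tau> = take n \<tau> @ [\<tau> ! n]" by (simp add: take_Suc_conv_app_nth)
  then show ?case using Suc by (simp add: app_snoc Mop_def min_def)
qed simp

lemma Mop_cong: "(\<And>v. v \<in> U j \<Longrightarrow> y v = y' v) \<Longrightarrow> Mop m U j ob a y = Mop m U j ob a y'"
  unfolding Mop_def by (intro ext sum.cong) auto

lemma app_cong: "(\<And>v. v \<in> U (Suc j) \<Longrightarrow> y v = y' v) \<Longrightarrow> u \<in> U (Suc (j + length \<sigma>)) \<Longrightarrow>
   app m U j \<sigma> y u = app m U j \<sigma> y' u"
proof (induct \<sigma> arbitrary: j y y')
  case (Cons p \<sigma>)
  have "Mop m U (Suc j) (fst p) (snd p) y = Mop m U (Suc j) (fst p) (snd p) y'"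
    by (rule Mop_cong) (use Cons in auto)
  then show ?case by simp
qed simp

lemma Mop_diff: "Mop m U j ob a (\<lambda>v. y v - z v) = (\<lambda>u. Mop m U j ob a y u - Mop m U j ob a z u)"
  unfolding Mop_def by (simp add: right_diff_distrib sum_subtractf)

lemma Mop_add: "Mop m U j ob a (\<lambda>v. y v + z v) = (\<lambda>u. Mop m U j ob a y u + Mop m U j ob a z u)"
  unfolding Mop_def by (simp add: distrib_left sum.distrib)

lemma Mop_lin: "finite I \<Longrightarrow> Mop m U j ob a (\<lambda>v. \<Sum>i\<in>I. c i * y i v) = (\<lambda>u. \<Sum>i\<in>I. c i * Mop m U j ob a (y i) u)"
  unfolding Mop_def by (simp add: sum_distrib_left sum.swap[where A=I] mult_ac)

lemma Mop_sum: "finite I \<Longrightarrow> Mop m U j ob a (\<lambda>v. \<Sum>i\<in>I. y i v) = (\<lambda>u. \<Sum>i\<in>I. Mop m U j ob a (y i) u)"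
  using Mop_lin[of I m U j ob a "\<lambda>_. 1" y] by simp

lemma app_diff: "app m U j \<sigma> (\<lambda>v. y v - z v) = (\<lambda>u. app m U j \<sigma> y u - app m U j \<sigma> z u)"
  by (induct \<sigma> arbitrary: j y z) (simp_all add: Mop_diff)

lemma app_add: "app m U j \<sigma> (\<lambda>v. y v + z v) = (\<lambda>u. app m U j \<sigma> y u + app m U j \<sigma> z u)"
  by (induct \<sigma> arbitrary: j y z) (simp_all add: Mop_add)

lemma app_lin: "finite I \<Longrightarrow> app m U j \<sigma> (\<lambda>v. \<Sum>i\<in>I. c i * y i v) = (\<lambda>u. \<Sum>i\<in>I. c i * app m U j \<sigma> (y i) u)"
  by (induct \<sigma> arbitrary: j y) (simp_all add: Mop_lin)

lemma app_scale: "app m U j \<sigma> (\<lambda>v. c * y v) = (\<lambda>u. c * app m U j \<sigma> y u)"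
  using app_lin[of "{0::nat}" m U j \<sigma> "\<lambda>_. c" "\<lambda>_. y"] by simp

lemma tp_append: "test_prob f \<tau> (\<sigma>@w, s) = obs_prod f \<tau> \<sigma> * test_prob f (\<tau>@\<sigma>) (w, s)"
  by (simp add: test_prob_def reach_append obs_prod_append)

lemma tp_Cons: "test_prob f \<tau> (p#w, s) = f \<tau> (fst p) * test_prob f (\<tau>@[p]) (w, s)"
  using tp_append[of f \<tau> "[p]" w s] by (simp add: obs_prod_Cons)




lemma finite_tests_from: "finite (tests_from H h :: ('o::finite,'a::finite) test set)"
proof -
  have "tests_from H h \<subseteq> {xs::('o \<times> 'a) list. length xs \<le> H} \<times> (UNIV :: 'o set)"
    by (auto simp: tests_from_def)
  moreover have "finite ({xs::('o \<times> 'a) list. length xs \<le> H} \<times> (UNIV :: 'o set))"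
    using finite_lists_length_le[OF finite_UNIV[where 'a="'o \<times> 'a"], of H]
    by (intro finite_cartesian_product) auto
  ultimately show ?thesis by (rule finite_subset)
qed

locale PSRL =
  fixes H :: nat
    and U :: "nat \<Rightarrow> ('o::finite, 'a::finite) test set"
    and f :: "('o,'a) hist \<Rightarrow> 'o \<Rightarrow> real"
    and \<alpha> :: real
    and m :: "nat \<Rightarrow> 'o \<Rightarrow> 'a \<Rightarrow> ('o,'a) test \<Rightarrow> ('o,'a) test \<Rightarrow> real"
    and \<pi> :: "('o,'a) hist \<Rightarrow> 'o \<Rightarrow> 'a \<Rightarrow> real"
  assumes H_pos: "1 \<le> H"
    and alpha_pos: "0 < \<alpha>"
    and psr: "valid_psr H U f"
    and core_bd: "core_bound H U f \<alpha>"
    and m_core: "\<forall>h\<in>{1..H - 1}. \<forall>ob a. \<forall>u\<in>U (Suc h). \<forall>\<tau>. length \<tau> = h - 1 \<longrightarrow>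
                   test_prob f \<tau> ((ob, a) # fst u, snd u) = (\<Sum>v\<in>U h. m h ob a u v * test_prob f \<tau> v)"
    and m_span: "\<forall>h\<in>{1..H - 1}. \<forall>ob a. \<forall>u\<in>U (Suc h). \<exists>c. \<forall>v\<in>U h.
                   m h ob a u v = (\<Sum>\<tau>\<in>{\<tau>. length \<tau> = h - 1}. c \<tau> * test_prob f \<tau> v)"
    and policy: "valid_policy H \<pi>"
begin

lemma vm: "valid_model H f" using psr by (simp add: valid_psr_def)

lemma Usub: "h \<in> {1..H} \<Longrightarrow> U h \<subseteq> tests_from H h"
  using psr by (simp add: valid_psr_def core_test_set_def)

lemma finU: "h \<in> {1..H} \<Longrightarrow> finite (U h)"
  using Usub finite_tests_from finite_subset by blast

lemma card_acts_le: "h \<in> {1..H} \<Longrightarrow> card (acts ` U h) \<le> UA_card H U"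
  unfolding UA_card_def acts_def by (rule Max_ge) auto

lemma card_U_le: "h \<in> {1..H} \<Longrightarrow> card (U h) \<le> U_card H U"
  unfolding U_card_def by (rule Max_ge) auto

lemma tp_sum: "length \<tau> = k \<Longrightarrow> Suc k \<le> H \<Longrightarrow> (\<Sum>u\<in>U (Suc k). \<bar>test_prob f \<tau> u\<bar>) \<le> real (UA_card H U)"
proof -
  assume a: "length \<tau> = k" "Suc k \<le> H"
  then have "(\<Sum>u\<in>U (Suc k). \<bar>test_prob f \<tau> u\<bar>) \<le> card (acts ` U (Suc k))"
    using Usub[of "Suc k"] finU[of "Suc k"] by (intro tp_sum_UA[OF vm]) auto
  also have "\<dots> \<le> real (UA_card H U)" using card_acts_le[of "Suc k"] a by simp
  finally show ?thesis .
qed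

lemma app_tp: "length \<tau> = j \<Longrightarrow> j + length \<sigma> \<le> H - 1 \<Longrightarrow> u \<in> U (Suc (j + length \<sigma>)) \<Longrightarrow>
   app m U j \<sigma> (test_prob f \<tau>) u = obs_prod f \<tau> \<sigma> * test_prob f (\<tau>@\<sigma>) u"
proof (induct \<sigma> arbitrary: \<tau> j)
  case Nil
  then show ?case by simp
next
  case (Cons p \<sigma>)
  have "app m U j (p#\<sigma>) (test_prob f \<tau>) u =
        app m U (Suc j) \<sigma> (Mop m U (Suc j) (fst p) (snd p) (test_prob f \<tau>)) u" by simp
  also have "\<dots> = app m U (Suc j) \<sigma> (\<lambda>v. f \<tau> (fst p) * test_prob f (\<tau>@[p]) v) u"
  proof (rule app_cong)
    fix v assume v: "v \<in> U (Suc (Suc j))"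
    have h: "Suc j \<in> {1..H - 1}" using Cons.prems by auto
    have mc0: "\<forall>u\<in>U (Suc (Suc j)). \<forall>\<tau>. length \<tau> = j \<longrightarrow> test_prob f \<tau> ((ob,a) # fst u, snd u)
       = (\<Sum>v\<in>U (Suc j). m (Suc j) ob a u v * test_prob f \<tau> v)" for ob a
      using m_core h by fastforce
    have "Mop m U (Suc j) (fst p) (snd p) (test_prob f \<tau>) v =
          test_prob f \<tau> ((fst p, snd p) # fst v, snd v)"
      using mc0[of "fst p" "snd p"] v Cons.prems(1) unfolding Mop_def by simp
    also have "\<dots> = f \<tau> (fst p) * test_prob f (\<tau>@[p]) v"
      by (simp add: tp_Cons)
    finally show "Mop m U (Suc j) (fst p) (snd p) (test_prob f \<tau>) v = f \<tau> (fst p) * test_prob f (\<tau>@[p]) v" .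
  next
    show "u \<in> U (Suc (Suc j + length \<sigma>))" using Cons.prems by simp
  qed
  also have "\<dots> = f \<tau> (fst p) * app m U (Suc j) \<sigma> (test_prob f (\<tau>@[p])) u"
    by (simp add: app_scale)
  also have "\<dots> = f \<tau> (fst p) * (obs_prod f (\<tau>@[p]) \<sigma> * test_prob f (\<tau>@[p]@\<sigma>) u)"
    using Cons.hyps[of "\<tau>@[p]" "Suc j"] Cons.prems by simp
  finally show ?case by (simp add: obs_prod_Cons)
qed

lemma UA_pos: "0 < real (UA_card H U) \<Longrightarrow> True" by simp

lemma alpha_le: "\<alpha> \<le> real (UA_card H U)"
proof -
  obtain ks X where ks: "core_matrix_hists H U f 0 ks"
    and pinv: "is_mp_pinv (U (Suc 0)) (length ks) (core_mat f ks) X"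
    and nb: "norm_1_1 (U (Suc 0)) (length ks) X \<le> 1 / \<alpha>"
    using core_bd H_pos unfolding core_bound_def by force
  have ks0: "ks = [[]]" using ks by (simp add: core_matrix_hists_def)
  have fin1: "finite (U 1)" using finU H_pos by auto
  have "\<exists>u0\<in>U 1. test_prob f [] u0 \<noteq> 0"
  proof (rule ccontr)
    assume "\<not> ?thesis"
    then have z: "\<forall>u\<in>U 1. test_prob f [] u = 0" by auto
    have "core_test_set H f 1 (U 1)" using psr H_pos by (auto simp: valid_psr_def)
    then have ct: "\<forall>t\<in>tests_from H 1. \<exists>c. \<forall>\<tau>. length \<tau> = 1 - 1 \<longrightarrow>
        test_prob f \<tau> t = (\<Sum>u\<in>U 1. c u * test_prob f \<tau> u)"
      by (simp add: core_test_set_def)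
    have "test_prob f [] ([], ob) = 0" for ob
    proof -
      have "([], ob) \<in> tests_from H 1" using H_pos by (simp add: tests_from_def)
      then obtain c where "\<forall>\<tau>. length \<tau> = 1 - 1 \<longrightarrow>
        test_prob f \<tau> ([], ob) = (\<Sum>u\<in>U 1. c u * test_prob f \<tau> u)" using ct by blast
      then have "test_prob f [] ([], ob) = (\<Sum>u\<in>U 1. c u * test_prob f [] u)" by simp
      also have "\<dots> = 0" using z by simp
      finally show ?thesis .
    qed
    then have "\<And>ob. f [] ob = 0" by (simp add: test_prob_def)
    moreover have "(\<Sum>ob\<in>UNIV. f [] ob) = 1" using vm H_pos by (simp add: valid_model_def)
    ultimately show False by simp
  qed
  then obtain u0 where u0: "u0 \<in> U 1" "test_prob f [] u0 \<noteq> 0" by auto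
  have "(\<Sum>i<1. core_mat f ks u0 i * (\<Sum>v\<in>U 1. X i v * core_mat f ks v 0)) = core_mat f ks u0 0"
    using pinv u0 ks0 unfolding is_mp_pinv_def by auto
  then have s1: "(\<Sum>v\<in>U 1. X 0 v * test_prob f [] v) = 1"
    using u0 ks0 by (simp add: core_mat_def)
  have Nge: "\<And>v. v \<in> U 1 \<Longrightarrow> \<bar>X 0 v\<bar> \<le> 1 / \<alpha>"
  proof -
    fix v assume v: "v \<in> U 1"
    have "\<bar>X 0 v\<bar> = (\<Sum>i<length ks. \<bar>X i v\<bar>)" using ks0 by simp
    also have "\<dots> \<le> norm_1_1 (U (Suc 0)) (length ks) X"
      unfolding norm_1_1_def using v fin1 by (auto intro!: Max_ge)
    finally show "\<bar>X 0 v\<bar> \<le> 1 / \<alpha>" using nb by simp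
  qed
  have "1 \<le> (\<Sum>v\<in>U 1. \<bar>X 0 v\<bar> * \<bar>test_prob f [] v\<bar>)"
    using s1 sum_abs[of "\<lambda>v. X 0 v * test_prob f [] v" "U 1"] by (simp add: abs_mult)
  also have "\<dots> \<le> (\<Sum>v\<in>U 1. 1 / \<alpha> * \<bar>test_prob f [] v\<bar>)"
    by (intro sum_mono mult_right_mono Nge) auto
  also have "\<dots> = 1 / \<alpha> * (\<Sum>v\<in>U (Suc 0). \<bar>test_prob f [] v\<bar>)" by (simp add: sum_distrib_left)
  also have "\<dots> \<le> 1 / \<alpha> * real (UA_card H U)"
    using alpha_pos H_pos by (intro mult_left_mono tp_sum) auto
  finally show ?thesis using alpha_pos by (simp add: field_simps)
qed

lemma Ktrick:
  assumes j: "j < H - 1"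
  obtains ks X where "\<forall>i<length ks. length (ks!i) = j"
   and "\<And>y ob a u. u \<in> U (Suc (Suc j)) \<Longrightarrow> Mop m U (Suc j) ob a y u =
      (\<Sum>i<length ks. (\<Sum>w\<in>U (Suc j). X i w * y w) * Mop m U (Suc j) ob a (test_prob f (ks!i)) u)"
   and "\<And>y. (\<Sum>i<length ks. \<bar>\<Sum>w\<in>U (Suc j). X i w * y w\<bar>) \<le> 1/\<alpha> * (\<Sum>w\<in>U (Suc j). \<bar>y w\<bar>)"
proof -
  have jH: "j \<in> {0..<H}" using j by auto
  obtain ks X where ks: "core_matrix_hists H U f j ks"
    and pinv: "is_mp_pinv (U (Suc j)) (length ks) (core_mat f ks) X"
    and nb: "norm_1_1 (U (Suc j)) (length ks) X \<le> 1 / \<alpha>"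
    using core_bd jH unfolding core_bound_def by blast
  define d where "d = length ks"
  define K where "K = core_mat f ks"
  define U' where "U' = U (Suc j)"
  have finU': "finite U'" unfolding U'_def using j by (intro finU) auto
  have lens: "\<forall>i<length ks. length (ks!i) = j"
  proof (cases "j = 0")
    case True then show ?thesis using ks by (simp add: core_matrix_hists_def)
  next
    case False then show ?thesis using ks by (simp add: core_matrix_hists_def)
  qed
  have span: "\<forall>\<tau>. \<exists>c. length \<tau> = j \<longrightarrow> (\<forall>v\<in>U'. test_prob f \<tau> v = (\<Sum>i<d. c i * K v i))"
  proof (cases "j = 0")
    case True
    then have "ks = [[]]" using ks by (simp add: core_matrix_hists_def)
    then show ?thesis using True by (auto simp: d_def K_def core_mat_def)
  next
    case False then show ?thesis using ks
      by (auto simp: core_matrix_hists_def d_def K_def core_mat_def U'_def)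
  qed
  then obtain D where D: "\<And>\<tau> v. length \<tau> = j \<Longrightarrow> v \<in> U' \<Longrightarrow> test_prob f \<tau> v = (\<Sum>i<d. D \<tau> i * K v i)"
    by metis
  have P1: "\<And>u l. u \<in> U' \<Longrightarrow> l < d \<Longrightarrow> (\<Sum>i<d. K u i * (\<Sum>v\<in>U'. X i v * K v l)) = K u l"
    using pinv unfolding is_mp_pinv_def d_def K_def U'_def by blast
  have P3: "\<And>u v. u \<in> U' \<Longrightarrow> v \<in> U' \<Longrightarrow> (\<Sum>i<d. K u i * X i v) = (\<Sum>i<d. K v i * X i u)"
    using pinv unfolding is_mp_pinv_def d_def K_def U'_def by blast
  show ?thesis
  proof (rule that[OF lens])
    fix y ob a u assume u: "u \<in> U (Suc (Suc j))"
    define r where "r v = m (Suc j) ob a u v" for v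
    define T where "T = {\<tau>::('o \<times> 'a) list. length \<tau> = j}"
    have finT: "finite T" unfolding T_def by (rule finite_len)
    have h: "Suc j \<in> {1..H - 1}" using j by auto
    obtain c where c: "\<And>v. v \<in> U' \<Longrightarrow> r v = (\<Sum>\<tau>\<in>T. c \<tau> * test_prob f \<tau> v)"
      using m_span h u unfolding r_def T_def U'_def by fastforce
    define w where "w l = (\<Sum>\<tau>\<in>T. c \<tau> * D \<tau> l)" for l
    have rK: "r v = (\<Sum>l<d. w l * K v l)" if v: "v \<in> U'" for v
    proof -
      have "r v = (\<Sum>\<tau>\<in>T. c \<tau> * (\<Sum>l<d. D \<tau> l * K v l))"
        using c[OF v] D[OF _ v] by (auto simp: T_def intro!: sum.cong)
      also have "\<dots> = (\<Sum>l<d. w l * K v l)"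
        by (simp add: w_def sum_distrib_left sum_distrib_right sum.swap[where A=T] mult_ac)
      finally show ?thesis .
    qed
    have A: "(\<Sum>v\<in>U'. r v * (\<Sum>i<d. K v i * X i w')) = r w'" if w': "w' \<in> U'" for w'
    proof -
      have "(\<Sum>v\<in>U'. r v * (\<Sum>i<d. K v i * X i w')) = (\<Sum>v\<in>U'. (\<Sum>l<d. w l * K v l) * (\<Sum>i<d. K w' i * X i v))"
        using rK P3[OF _ w'] by (intro sum.cong refl) auto
      also have "\<dots> = (\<Sum>l<d. w l * (\<Sum>i<d. K w' i * (\<Sum>v\<in>U'. X i v * K v l)))"
        apply (simp add: sum_distrib_left sum_distrib_right sum.swap[where A=U'] mult_ac)
        by (rule sum.swap)
      also have "\<dots> = (\<Sum>l<d. w l * K w' l)" using P1[OF w'] by simp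
      also have "\<dots> = r w'" using rK[OF w'] by simp
      finally show ?thesis .
    qed
    have "(\<Sum>i<d. (\<Sum>w\<in>U'. X i w * y w) * (\<Sum>v\<in>U'. r v * K v i)) =
          (\<Sum>w\<in>U'. y w * (\<Sum>v\<in>U'. r v * (\<Sum>i<d. K v i * X i w)))"
      by (simp add: sum_distrib_left sum_distrib_right sum.swap[where A="{..<d}"] mult_ac)
    also have "\<dots> = (\<Sum>w\<in>U'. y w * r w)" using A by simp
    finally have eq: "(\<Sum>i<d. (\<Sum>w\<in>U'. X i w * y w) * (\<Sum>v\<in>U'. r v * K v i)) = (\<Sum>w\<in>U'. r w * y w)"
      by (simp add: mult_ac)
    show "Mop m U (Suc j) ob a y u =
      (\<Sum>i<length ks. (\<Sum>w\<in>U (Suc j). X i w * y w) * Mop m U (Suc j) ob a (test_prob f (ks!i)) u)"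
      using eq by (simp add: Mop_def r_def K_def core_mat_def d_def U'_def)
  next
    fix y
    show "(\<Sum>i<length ks. \<bar>\<Sum>w\<in>U (Suc j). X i w * y w\<bar>) \<le> 1/\<alpha> * (\<Sum>w\<in>U (Suc j). \<bar>y w\<bar>)"
    proof (cases "U' = {}")
      case True then show ?thesis by (simp add: U'_def)
    next
      case False
      have Nge: "(\<Sum>i<d. \<bar>X i w\<bar>) \<le> 1/\<alpha>" if "w \<in> U'" for w
      proof -
        have "(\<Sum>i<d. \<bar>X i w\<bar>) \<le> norm_1_1 U' d X"
          unfolding norm_1_1_def using False that finU' by (auto intro!: Max_ge)
        then show ?thesis using nb by (simp add: U'_def d_def)
      qed
      have "(\<Sum>i<d. \<bar>\<Sum>w\<in>U'. X i w * y w\<bar>) \<le> (\<Sum>i<d. \<Sum>w\<in>U'. \<bar>X i w\<bar> * \<bar>y w\<bar>)"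
        by (intro sum_mono) (simp add: sum_abs[THEN order_trans] abs_mult)
      also have "\<dots> = (\<Sum>w\<in>U'. \<bar>y w\<bar> * (\<Sum>i<d. \<bar>X i w\<bar>))"
        by (simp add: sum_distrib_left sum.swap[where A="{..<d}"] mult_ac)
      also have "\<dots> \<le> (\<Sum>w\<in>U'. \<bar>y w\<bar> * (1/\<alpha>))"
        by (intro sum_mono mult_left_mono Nge) auto
      also have "\<dots> = 1/\<alpha> * (\<Sum>w\<in>U'. \<bar>y w\<bar>)" by (simp add: sum_distrib_left mult_ac)
      finally show ?thesis by (simp add: U'_def d_def)
    qed
  qed
qed

lemma CA_ge1: "1 \<le> real (UA_card H U) / \<alpha>"
  using alpha_le alpha_pos by simp

lemma W_bound:
  assumes lr: "length \<rho> = j" and jn: "j + n \<le> H - 1"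
  shows "(\<Sum>\<sigma>\<in>{\<sigma>. length \<sigma> = n}. polw \<pi> \<rho> \<sigma> * (\<Sum>u\<in>U (Suc (j+n)). \<bar>app m U j \<sigma> y u\<bar>))
     \<le> real (UA_card H U) / \<alpha> * (\<Sum>v\<in>U (Suc j). \<bar>y v\<bar>)"
proof (cases n)
  case 0
  have "{\<sigma>::('o \<times> 'a) list. length \<sigma> = 0} = {[]}" by auto
  then have "(\<Sum>\<sigma>\<in>{\<sigma>. length \<sigma> = n}. polw \<pi> \<rho> \<sigma> * (\<Sum>u\<in>U (Suc (j+n)). \<bar>app m U j \<sigma> y u\<bar>))
      = 1 * (\<Sum>v\<in>U (Suc j). \<bar>y v\<bar>)" using 0 by simp
  also have "\<dots> \<le> real (UA_card H U) / \<alpha> * (\<Sum>v\<in>U (Suc j). \<bar>y v\<bar>)"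
    by (intro mult_right_mono CA_ge1 sum_nonneg) auto
  finally show ?thesis .
next
  case (Suc n')
  have j: "j < H - 1" using jn Suc by auto
  obtain ks X where lens: "\<forall>i<length ks. length (ks!i) = j"
   and Kt: "\<And>y ob a u. u \<in> U (Suc (Suc j)) \<Longrightarrow> Mop m U (Suc j) ob a y u =
      (\<Sum>i<length ks. (\<Sum>w\<in>U (Suc j). X i w * y w) * Mop m U (Suc j) ob a (test_prob f (ks!i)) u)"
   and Kn: "\<And>y. (\<Sum>i<length ks. \<bar>\<Sum>w\<in>U (Suc j). X i w * y w\<bar>) \<le> 1/\<alpha> * (\<Sum>w\<in>U (Suc j). \<bar>y w\<bar>)"
    using Ktrick[OF j] by blast
  define c where "c i = (\<Sum>w\<in>U (Suc j). X i w * y w)" for i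
  define d where "d = length ks"
  define UA where "UA = real (UA_card H U)"
  have key: "app m U j \<sigma> y u = (\<Sum>i<d. c i * (obs_prod f (ks!i) \<sigma> * test_prob f (ks!i @ \<sigma>) u))"
    if \<sigma>: "length \<sigma> = n" and u: "u \<in> U (Suc (j+n))" for \<sigma> u
  proof -
    obtain p \<sigma>' where ps: "\<sigma> = p # \<sigma>'" using \<sigma> Suc by (cases \<sigma>) auto
    have "app m U j \<sigma> y u = app m U (Suc j) \<sigma>' (Mop m U (Suc j) (fst p) (snd p) y) u" using ps by simp
    also have "\<dots> = app m U (Suc j) \<sigma>' (\<lambda>v. \<Sum>i<d. c i * Mop m U (Suc j) (fst p) (snd p) (test_prob f (ks!i)) v) u"
      by (rule app_cong) (use Kt u \<sigma> ps in \<open>auto simp: c_def d_def\<close>)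
    also have "\<dots> = (\<Sum>i<d. c i * app m U j \<sigma> (test_prob f (ks!i)) u)"
      by (simp add: app_lin ps)
    also have "\<dots> = (\<Sum>i<d. c i * (obs_prod f (ks!i) \<sigma> * test_prob f (ks!i @ \<sigma>) u))"
      using lens jn \<sigma> u by (intro sum.cong refl) (simp add: app_tp d_def)
    finally show ?thesis .
  qed
  have per: "(\<Sum>u\<in>U (Suc (j+n)). \<bar>app m U j \<sigma> y u\<bar>) \<le> (\<Sum>i<d. \<bar>c i\<bar> * obs_prod f (ks!i) \<sigma> * UA)"
    if \<sigma>: "length \<sigma> = n" for \<sigma>
  proof -
    have ob: "0 \<le> obs_prod f (ks!i) \<sigma>" if "i < d" for i
      using lens that \<sigma> jn by (intro obs_nonneg[OF vm]) (auto simp: d_def)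
    have "(\<Sum>u\<in>U (Suc (j+n)). \<bar>app m U j \<sigma> y u\<bar>) \<le>
          (\<Sum>u\<in>U (Suc (j+n)). \<Sum>i<d. \<bar>c i\<bar> * obs_prod f (ks!i) \<sigma> * \<bar>test_prob f (ks!i @ \<sigma>) u\<bar>)"
    proof (intro sum_mono)
      fix u assume u: "u \<in> U (Suc (j+n))"
      have "\<bar>app m U j \<sigma> y u\<bar> \<le> (\<Sum>i<d. \<bar>c i * (obs_prod f (ks!i) \<sigma> * test_prob f (ks!i @ \<sigma>) u)\<bar>)"
        unfolding key[OF \<sigma> u] by (rule sum_abs)
      also have "\<dots> = (\<Sum>i<d. \<bar>c i\<bar> * obs_prod f (ks!i) \<sigma> * \<bar>test_prob f (ks!i @ \<sigma>) u\<bar>)"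
        using ob by (intro sum.cong refl) (simp add: abs_mult)
      finally show "\<bar>app m U j \<sigma> y u\<bar> \<le> (\<Sum>i<d. \<bar>c i\<bar> * obs_prod f (ks!i) \<sigma> * \<bar>test_prob f (ks!i @ \<sigma>) u\<bar>)" .
    qed
    also have "\<dots> = (\<Sum>i<d. \<bar>c i\<bar> * obs_prod f (ks!i) \<sigma> * (\<Sum>u\<in>U (Suc (j+n)). \<bar>test_prob f (ks!i @ \<sigma>) u\<bar>))"
      by (simp add: sum.swap[where B="{..<d}"] sum_distrib_left)
    also have "\<dots> \<le> (\<Sum>i<d. \<bar>c i\<bar> * obs_prod f (ks!i) \<sigma> * UA)"
    proof (intro sum_mono mult_left_mono)
      fix i assume i: "i \<in> {..<d}"
      show "(\<Sum>u\<in>U (Suc (j+n)). \<bar>test_prob f (ks!i @ \<sigma>) u\<bar>) \<le> UA"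
        unfolding UA_def using lens i \<sigma> jn H_pos by (intro tp_sum) (auto simp: d_def)
      show "0 \<le> \<bar>c i\<bar> * obs_prod f (ks!i) \<sigma>" using ob i by simp
    qed
    finally show ?thesis .
  qed
  have "(\<Sum>\<sigma>\<in>{\<sigma>. length \<sigma> = n}. polw \<pi> \<rho> \<sigma> * (\<Sum>u\<in>U (Suc (j+n)). \<bar>app m U j \<sigma> y u\<bar>))
     \<le> (\<Sum>\<sigma>\<in>{\<sigma>. length \<sigma> = n}. polw \<pi> \<rho> \<sigma> * (\<Sum>i<d. \<bar>c i\<bar> * obs_prod f (ks!i) \<sigma> * UA))"
    using per lr jn by (intro sum_mono mult_left_mono polw_nonneg[OF policy]) auto
  also have "\<dots> = (\<Sum>i<d. \<bar>c i\<bar> * UA * (\<Sum>\<sigma>\<in>{\<sigma>. length \<sigma> = n}. polw \<pi> \<rho> \<sigma> * obs_prod f (ks!i) \<sigma>))"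
    by (simp add: sum_distrib_left sum.swap[where B="{..<d}"] mult_ac)
  also have "\<dots> = (\<Sum>i<d. \<bar>c i\<bar> * UA)"
    using lens lr jn by (intro sum.cong refl) (simp add: sum_one[OF vm policy] d_def)
  also have "\<dots> = UA * (\<Sum>i<d. \<bar>c i\<bar>)" by (simp add: sum_distrib_left mult_ac)
  also have "\<dots> \<le> UA * (1/\<alpha> * (\<Sum>w\<in>U (Suc j). \<bar>y w\<bar>))"
    using Kn[of y] by (intro mult_left_mono) (auto simp: c_def d_def UA_def)
  finally show ?thesis by (simp add: UA_def)
qed

end



lemma decomp:
  "app m' U 0 \<sigma> y' u - app m U 0 \<sigma> y u =
   (\<Sum>j<length \<sigma>. app m U (Suc j) (drop (Suc j) \<sigma>)
      (\<lambda>v. Mop m' U (Suc j) (fst (\<sigma>!j)) (snd (\<sigma>!j)) (app m' U 0 (take j \<sigma>) y') v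
          - Mop m U (Suc j) (fst (\<sigma>!j)) (snd (\<sigma>!j)) (app m' U 0 (take j \<sigma>) y') v) u)
   + app m U 0 \<sigma> (\<lambda>v. y' v - y v) u"
proof (induct \<sigma> arbitrary: u rule: rev_induct)
  case Nil
  then show ?case by simp
next
  case (snoc p \<sigma>)
  define L where "L = Suc (length \<sigma>)"
  define T where "T j = app m U (Suc j) (drop (Suc j) \<sigma>)
      (\<lambda>v. Mop m' U (Suc j) (fst (\<sigma>!j)) (snd (\<sigma>!j)) (app m' U 0 (take j \<sigma>) y') v
          - Mop m U (Suc j) (fst (\<sigma>!j)) (snd (\<sigma>!j)) (app m' U 0 (take j \<sigma>) y') v)" for j
  define R where "R = app m U 0 \<sigma> (\<lambda>v. y' v - y v)"
  have IH: "(\<lambda>v. app m' U 0 \<sigma> y' v - app m U 0 \<sigma> y v) = (\<lambda>v. (\<Sum>j<length \<sigma>. T j v) + R v)"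
    using snoc by (simp add: T_def R_def)
  have "app m' U 0 (\<sigma>@[p]) y' u - app m U 0 (\<sigma>@[p]) y u =
     Mop m' U L (fst p) (snd p) (app m' U 0 \<sigma> y') u - Mop m U L (fst p) (snd p) (app m U 0 \<sigma> y) u"
    by (simp add: app_snoc L_def)
  also have "\<dots> = Mop m U L (fst p) (snd p) (\<lambda>v. app m' U 0 \<sigma> y' v - app m U 0 \<sigma> y v) u
      + (Mop m' U L (fst p) (snd p) (app m' U 0 \<sigma> y') u - Mop m U L (fst p) (snd p) (app m' U 0 \<sigma> y') u)"
    by (simp add: Mop_diff)
  also have "Mop m U L (fst p) (snd p) (\<lambda>v. app m' U 0 \<sigma> y' v - app m U 0 \<sigma> y v) u =
      (\<Sum>j<length \<sigma>. Mop m U L (fst p) (snd p) (T j) u) + Mop m U L (fst p) (snd p) R u"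
    unfolding IH by (simp add: Mop_add Mop_sum)
  also have "(\<Sum>j<length \<sigma>. Mop m U L (fst p) (snd p) (T j) u) =
     (\<Sum>j<length \<sigma>. app m U (Suc j) (drop (Suc j) (\<sigma>@[p]))
      (\<lambda>v. Mop m' U (Suc j) (fst ((\<sigma>@[p])!j)) (snd ((\<sigma>@[p])!j)) (app m' U 0 (take j (\<sigma>@[p])) y') v
          - Mop m U (Suc j) (fst ((\<sigma>@[p])!j)) (snd ((\<sigma>@[p])!j)) (app m' U 0 (take j (\<sigma>@[p])) y') v) u)"
  proof (intro sum.cong refl)
    fix j assume j: "j \<in> {..<length \<sigma>}"
    then have e: "Suc (length \<sigma> - Suc 0) = length \<sigma>" by auto
    show "Mop m U L (fst p) (snd p) (T j) u = app m U (Suc j) (drop (Suc j) (\<sigma>@[p]))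
      (\<lambda>v. Mop m' U (Suc j) (fst ((\<sigma>@[p])!j)) (snd ((\<sigma>@[p])!j)) (app m' U 0 (take j (\<sigma>@[p])) y') v
          - Mop m U (Suc j) (fst ((\<sigma>@[p])!j)) (snd ((\<sigma>@[p])!j)) (app m' U 0 (take j (\<sigma>@[p])) y') v) u"
      using j e by (simp add: T_def L_def app_snoc nth_append)
  qed
  also have "Mop m U L (fst p) (snd p) R u = app m U 0 (\<sigma>@[p]) (\<lambda>v. y' v - y v) u"
    by (simp add: R_def app_snoc L_def)
  finally show ?case by (simp add: L_def)
qed




locale PSRL2 = PSRL H U f \<alpha> m \<pi> for H U f \<alpha> m \<pi> +
  fixes m' :: "nat \<Rightarrow> 'o \<Rightarrow> 'a \<Rightarrow> ('o::finite,'a::finite) test \<Rightarrow> ('o,'a) test \<Rightarrow> real"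
    and q0' :: "('o,'a) test \<Rightarrow> real"
    and \<epsilon>1 \<epsilon>op :: real
  assumes obs_in_UH: "\<forall>ob. ([], ob) \<in> U H"
    and eps1_pos: "0 < \<epsilon>1"
    and eps1_le: "\<epsilon>1 \<le> real (UA_card H U)"
    and eps_op: "\<epsilon>op = \<alpha> * \<epsilon>1 /
                   (4 * real H * real (UA_card H U) ^ 2 * real (U_card H U) * real (card (UNIV :: 'o set)))"
    and m_close: "\<forall>h\<in>{1..H - 1}. \<forall>ob a. \<forall>u\<in>U (Suc h). \<forall>v\<in>U h. \<bar>m h ob a u v - m' h ob a u v\<bar> \<le> \<epsilon>op"
    and q_close: "\<forall>u\<in>U 1. \<bar>test_prob f [] u - q0' u\<bar> \<le> \<epsilon>op"
begin

definition xs where "xs \<sigma> = app m' U 0 \<sigma> q0'"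
definition bs where "bs \<sigma> = app m U 0 \<sigma> (test_prob f [])"
definition Dz where "Dz j ob a y = (\<lambda>u. Mop m' U j ob a y u - Mop m U j ob a y u)"
definition err where "err n = (\<Sum>\<sigma>\<in>{\<sigma>. length \<sigma> = n}. polw \<pi> [] \<sigma> * (\<Sum>u\<in>U (Suc n). \<bar>xs \<sigma> u - bs \<sigma> u\<bar>))"

abbreviation "CA \<equiv> real (UA_card H U) / \<alpha>"

lemma err_bound1:
  assumes n: "n \<le> H - 1"
  shows "err n \<le> CA * ((\<Sum>j<n. \<Sum>\<rho>\<in>{\<rho>. length \<rho> = Suc j}. polw \<pi> [] \<rho> *
           (\<Sum>v\<in>U (Suc (Suc j)). \<bar>Dz (Suc j) (fst (\<rho>!j)) (snd (\<rho>!j)) (xs (take j \<rho>)) v\<bar>))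
          + (\<Sum>v\<in>U 1. \<bar>q0' v - test_prob f [] v\<bar>))"
proof -
  define T where "T j \<sigma> = app m U (Suc j) (drop (Suc j) \<sigma>) (Dz (Suc j) (fst (\<sigma>!j)) (snd (\<sigma>!j)) (xs (take j \<sigma>)))" for j \<sigma>
  define R where "R \<sigma> = app m U 0 \<sigma> (\<lambda>v. q0' v - test_prob f [] v)" for \<sigma>
  define N where "N = {\<sigma>::('o \<times> 'a) list. length \<sigma> = n}"
  have dec: "xs \<sigma> u - bs \<sigma> u = (\<Sum>j<length \<sigma>. T j \<sigma> u) + R \<sigma> u" for \<sigma> u
    unfolding xs_def bs_def T_def R_def Dz_def by (rule decomp)
  have pw: "0 \<le> polw \<pi> [] \<sigma>" if "\<sigma> \<in> N" for \<sigma>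
    using that n by (intro polw_nonneg[OF policy]) (auto simp: N_def)
  have "err n \<le> (\<Sum>\<sigma>\<in>N. polw \<pi> [] \<sigma> * (\<Sum>u\<in>U (Suc n). (\<Sum>j<n. \<bar>T j \<sigma> u\<bar>) + \<bar>R \<sigma> u\<bar>))"
    unfolding err_def N_def[symmetric]
  proof (rule sum_mono)
    fix \<sigma> assume \<sigma>: "\<sigma> \<in> N"
    have "(\<Sum>u\<in>U (Suc n). \<bar>xs \<sigma> u - bs \<sigma> u\<bar>) \<le> (\<Sum>u\<in>U (Suc n). (\<Sum>j<n. \<bar>T j \<sigma> u\<bar>) + \<bar>R \<sigma> u\<bar>)"
    proof (intro sum_mono)
      fix u
      have "\<bar>xs \<sigma> u - bs \<sigma> u\<bar> \<le> \<bar>\<Sum>j<n. T j \<sigma> u\<bar> + \<bar>R \<sigma> u\<bar>"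
        using \<sigma> by (simp add: dec N_def abs_triangle_ineq)
      also have "\<dots> \<le> (\<Sum>j<n. \<bar>T j \<sigma> u\<bar>) + \<bar>R \<sigma> u\<bar>" by (simp add: sum_abs)
      finally show "\<bar>xs \<sigma> u - bs \<sigma> u\<bar> \<le> (\<Sum>j<n. \<bar>T j \<sigma> u\<bar>) + \<bar>R \<sigma> u\<bar>" .
    qed
    then show "polw \<pi> [] \<sigma> * (\<Sum>u\<in>U (Suc n). \<bar>xs \<sigma> u - bs \<sigma> u\<bar>) \<le>
      polw \<pi> [] \<sigma> * (\<Sum>u\<in>U (Suc n). (\<Sum>j<n. \<bar>T j \<sigma> u\<bar>) + \<bar>R \<sigma> u\<bar>)"
      by (intro mult_left_mono pw[OF \<sigma>])
  qed
  also have "\<dots> = (\<Sum>j<n. \<Sum>\<sigma>\<in>N. polw \<pi> [] \<sigma> * (\<Sum>u\<in>U (Suc n). \<bar>T j \<sigma> u\<bar>))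
      + (\<Sum>\<sigma>\<in>N. polw \<pi> [] \<sigma> * (\<Sum>u\<in>U (Suc n). \<bar>R \<sigma> u\<bar>))"
    by (simp add: sum.distrib distrib_left sum_distrib_left sum.swap[where A=N] sum.swap[where B="{..<n}"])
  also have "\<dots> \<le> (\<Sum>j<n. CA * (\<Sum>\<rho>\<in>{\<rho>. length \<rho> = Suc j}. polw \<pi> [] \<rho> *
           (\<Sum>v\<in>U (Suc (Suc j)). \<bar>Dz (Suc j) (fst (\<rho>!j)) (snd (\<rho>!j)) (xs (take j \<rho>)) v\<bar>)))
      + CA * (\<Sum>v\<in>U 1. \<bar>q0' v - test_prob f [] v\<bar>)"
  proof (intro add_mono sum_mono)
    fix j assume j: "j \<in> {..<n}"
    define k where "k = n - Suc j"
    have nk: "n = Suc j + k" using j by (simp add: k_def)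
    have "(\<Sum>\<sigma>\<in>N. polw \<pi> [] \<sigma> * (\<Sum>u\<in>U (Suc n). \<bar>T j \<sigma> u\<bar>)) =
       (\<Sum>\<rho>\<in>{\<rho>. length \<rho> = Suc j}. \<Sum>\<sigma>\<in>{\<sigma>. length \<sigma> = k}. polw \<pi> [] (\<rho>@\<sigma>) * (\<Sum>u\<in>U (Suc n). \<bar>T j (\<rho>@\<sigma>) u\<bar>))"
      unfolding N_def nk by (rule sum_len_add)
    also have "\<dots> = (\<Sum>\<rho>\<in>{\<rho>. length \<rho> = Suc j}. polw \<pi> [] \<rho> * (\<Sum>\<sigma>\<in>{\<sigma>. length \<sigma> = k}. polw \<pi> \<rho> \<sigma> *
         (\<Sum>u\<in>U (Suc (Suc j + k)). \<bar>app m U (Suc j) \<sigma> (Dz (Suc j) (fst (\<rho>!j)) (snd (\<rho>!j)) (xs (take j \<rho>))) u\<bar>)))"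
      by (intro sum.cong refl) (simp add: T_def polw_append sum_distrib_left nth_append nk mult_ac)
    also have "\<dots> \<le> (\<Sum>\<rho>\<in>{\<rho>. length \<rho> = Suc j}. polw \<pi> [] \<rho> * (CA *
           (\<Sum>v\<in>U (Suc (Suc j)). \<bar>Dz (Suc j) (fst (\<rho>!j)) (snd (\<rho>!j)) (xs (take j \<rho>)) v\<bar>)))"
    proof (intro sum_mono mult_left_mono)
      fix \<rho> :: "('o \<times> 'a) list" assume \<rho>: "\<rho> \<in> {\<rho>. length \<rho> = Suc j}"
      show "0 \<le> polw \<pi> [] \<rho>" using \<rho> j n by (intro polw_nonneg[OF policy]) auto
      show "(\<Sum>\<sigma>\<in>{\<sigma>. length \<sigma> = k}. polw \<pi> \<rho> \<sigma> *
         (\<Sum>u\<in>U (Suc (Suc j + k)). \<bar>app m U (Suc j) \<sigma> (Dz (Suc j) (fst (\<rho>!j)) (snd (\<rho>!j)) (xs (take j \<rho>))) u\<bar>))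
         \<le> CA * (\<Sum>v\<in>U (Suc (Suc j)). \<bar>Dz (Suc j) (fst (\<rho>!j)) (snd (\<rho>!j)) (xs (take j \<rho>)) v\<bar>)"
        using \<rho> n nk by (intro W_bound) auto
    qed
    also have "\<dots> = CA * (\<Sum>\<rho>\<in>{\<rho>. length \<rho> = Suc j}. polw \<pi> [] \<rho> *
           (\<Sum>v\<in>U (Suc (Suc j)). \<bar>Dz (Suc j) (fst (\<rho>!j)) (snd (\<rho>!j)) (xs (take j \<rho>)) v\<bar>))"
      by (simp add: sum_distrib_left mult_ac)
    finally show "(\<Sum>\<sigma>\<in>N. polw \<pi> [] \<sigma> * (\<Sum>u\<in>U (Suc n). \<bar>T j \<sigma> u\<bar>)) \<le> \<dots>" .
  next
    show "(\<Sum>\<sigma>\<in>N. polw \<pi> [] \<sigma> * (\<Sum>u\<in>U (Suc n). \<bar>R \<sigma> u\<bar>)) \<le> CA * (\<Sum>v\<in>U 1. \<bar>q0' v - test_prob f [] v\<bar>)"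
      using W_bound[of "[]" 0 n "\<lambda>v. q0' v - test_prob f [] v"] n by (simp add: N_def R_def)
  qed
  finally show ?thesis by (simp add: distrib_left sum_distrib_left)
qed

lemma eps_nonneg: "0 \<le> \<epsilon>op"
  unfolding eps_op using alpha_pos eps1_pos by (intro divide_nonneg_nonneg) auto

lemma Dz_bound:
  assumes j: "Suc j \<le> H - 1"
  shows "(\<Sum>v\<in>U (Suc (Suc j)). \<bar>Dz (Suc j) ob a y v\<bar>) \<le> real (U_card H U) * \<epsilon>op * (\<Sum>w\<in>U (Suc j). \<bar>y w\<bar>)"
proof -
  have h: "Suc j \<in> {1..H - 1}" using j by auto
  have mc: "\<forall>u\<in>U (Suc (Suc j)). \<forall>v\<in>U (Suc j). \<bar>m (Suc j) ob a u v - m' (Suc j) ob a u v\<bar> \<le> \<epsilon>op"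
    using m_close h by blast
  have "(\<Sum>v\<in>U (Suc (Suc j)). \<bar>Dz (Suc j) ob a y v\<bar>) \<le> (\<Sum>v\<in>U (Suc (Suc j)). \<epsilon>op * (\<Sum>w\<in>U (Suc j). \<bar>y w\<bar>))"
  proof (rule sum_mono)
    fix u assume u: "u \<in> U (Suc (Suc j))"
    have "\<bar>Dz (Suc j) ob a y u\<bar> = \<bar>\<Sum>w\<in>U (Suc j). (m' (Suc j) ob a u w - m (Suc j) ob a u w) * y w\<bar>"
      by (simp add: Dz_def Mop_def sum_subtractf left_diff_distrib)
    also have "\<dots> \<le> (\<Sum>w\<in>U (Suc j). \<bar>m' (Suc j) ob a u w - m (Suc j) ob a u w\<bar> * \<bar>y w\<bar>)"
      by (rule sum_abs[THEN order_trans]) (simp add: abs_mult)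
    also have "\<dots> \<le> (\<Sum>w\<in>U (Suc j). \<epsilon>op * \<bar>y w\<bar>)"
    proof (intro sum_mono mult_right_mono)
      fix w assume "w \<in> U (Suc j)"
      then show "\<bar>m' (Suc j) ob a u w - m (Suc j) ob a u w\<bar> \<le> \<epsilon>op" using mc u by (simp add: abs_minus_commute)
    qed auto
    finally show "\<bar>Dz (Suc j) ob a y u\<bar> \<le> \<epsilon>op * (\<Sum>w\<in>U (Suc j). \<bar>y w\<bar>)" by (simp add: sum_distrib_left)
  qed
  also have "\<dots> = real (card (U (Suc (Suc j)))) * \<epsilon>op * (\<Sum>w\<in>U (Suc j). \<bar>y w\<bar>)" by simp
  also have "\<dots> \<le> real (U_card H U) * \<epsilon>op * (\<Sum>w\<in>U (Suc j). \<bar>y w\<bar>)"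
    using card_U_le[of "Suc (Suc j)"] j eps_nonneg
    by (intro mult_right_mono sum_nonneg) auto
  finally show ?thesis .
qed

lemma bs_sum:
  assumes j: "j \<le> H - 1"
  shows "(\<Sum>\<rho>\<in>{\<rho>. length \<rho> = j}. polw \<pi> [] \<rho> * (\<Sum>u\<in>U (Suc j). \<bar>bs \<rho> u\<bar>)) \<le> real (UA_card H U)"
proof -
  have "(\<Sum>\<rho>\<in>{\<rho>. length \<rho> = j}. polw \<pi> [] \<rho> * (\<Sum>u\<in>U (Suc j). \<bar>bs \<rho> u\<bar>)) \<le>
        (\<Sum>\<rho>\<in>{\<rho>. length \<rho> = j}. polw \<pi> [] \<rho> * obs_prod f [] \<rho> * real (UA_card H U))"
  proof (rule sum_mono)
    fix \<rho> :: "('o \<times> 'a) list" assume \<rho>: "\<rho> \<in> {\<rho>. length \<rho> = j}"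
    have ob: "0 \<le> obs_prod f [] \<rho>" using \<rho> j by (intro obs_nonneg[OF vm]) auto
    have "(\<Sum>u\<in>U (Suc j). \<bar>bs \<rho> u\<bar>) = (\<Sum>u\<in>U (Suc j). obs_prod f [] \<rho> * \<bar>test_prob f \<rho> u\<bar>)"
      using \<rho> j ob by (intro sum.cong refl) (simp add: bs_def app_tp abs_mult)
    also have "\<dots> = obs_prod f [] \<rho> * (\<Sum>u\<in>U (Suc j). \<bar>test_prob f \<rho> u\<bar>)" by (simp add: sum_distrib_left)
    also have "\<dots> \<le> obs_prod f [] \<rho> * real (UA_card H U)"
      using \<rho> j H_pos by (intro mult_left_mono ob tp_sum) auto
    finally show "polw \<pi> [] \<rho> * (\<Sum>u\<in>U (Suc j). \<bar>bs \<rho> u\<bar>) \<le> polw \<pi> [] \<rho> * obs_prod f [] \<rho> * real (UA_card H U)"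
      using \<rho> j by (simp add: mult.assoc mult_left_mono polw_nonneg[OF policy])
  qed
  also have "\<dots> = real (UA_card H U) * (\<Sum>\<rho>\<in>{\<rho>. length \<rho> = j}. polw \<pi> [] \<rho> * obs_prod f [] \<rho>)"
    by (simp add: sum_distrib_left mult_ac)
  also have "\<dots> = real (UA_card H U)" using j by (simp add: sum_one[OF vm policy])
  finally show ?thesis .
qed

lemma D_sum:
  assumes j: "Suc j \<le> H - 1"
  shows "(\<Sum>\<rho>\<in>{\<rho>. length \<rho> = Suc j}. polw \<pi> [] \<rho> *
           (\<Sum>v\<in>U (Suc (Suc j)). \<bar>Dz (Suc j) (fst (\<rho>!j)) (snd (\<rho>!j)) (xs (take j \<rho>)) v\<bar>))
     \<le> real (U_card H U) * \<epsilon>op * real (card (UNIV :: 'o set)) * (real (UA_card H U) + err j)"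
proof -
  define Uc where "Uc = real (U_card H U)"
  define Oc where "Oc = real (card (UNIV :: 'o set))"
  define nx where "nx \<rho> = (\<Sum>w\<in>U (Suc j). \<bar>xs \<rho> w\<bar>)" for \<rho>
  have "(\<Sum>\<rho>\<in>{\<rho>. length \<rho> = Suc j}. polw \<pi> [] \<rho> *
           (\<Sum>v\<in>U (Suc (Suc j)). \<bar>Dz (Suc j) (fst (\<rho>!j)) (snd (\<rho>!j)) (xs (take j \<rho>)) v\<bar>))
      \<le> (\<Sum>\<rho>\<in>{\<rho>. length \<rho> = Suc j}. polw \<pi> [] \<rho> * (Uc * \<epsilon>op * nx (take j \<rho>)))"
    unfolding Uc_def nx_def using j
    by (intro sum_mono mult_left_mono Dz_bound polw_nonneg[OF policy]) auto
  also have "\<dots> = (\<Sum>\<rho>\<in>{\<rho>. length \<rho> = j}. polw \<pi> [] \<rho> * (Uc * \<epsilon>op * nx \<rho>) *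
        (\<Sum>ob\<in>UNIV. \<Sum>a\<in>UNIV. \<pi> \<rho> ob a))"
    unfolding sum_len_Suc by (intro sum.cong refl) (simp add: polw_snoc sum_distrib_left sum_distrib_right mult_ac)
  also have "\<dots> = (\<Sum>\<rho>\<in>{\<rho>. length \<rho> = j}. polw \<pi> [] \<rho> * (Uc * \<epsilon>op * nx \<rho>) * Oc)"
  proof (intro sum.cong refl)
    fix \<rho> :: "('o \<times> 'a) list" assume "\<rho> \<in> {\<rho>. length \<rho> = j}"
    then have "length \<rho> < H" using j by auto
    then have "(\<Sum>ob\<in>UNIV. \<Sum>a\<in>UNIV. \<pi> \<rho> ob a) = Oc" using policy by (simp add: valid_policy_def Oc_def)
    then show "polw \<pi> [] \<rho> * (Uc * \<epsilon>op * nx \<rho>) * (\<Sum>ob\<in>UNIV. \<Sum>a\<in>UNIV. \<pi> \<rho> ob a) = polw \<pi> [] \<rho> * (Uc * \<epsilon>op * nx \<rho>) * Oc" by simp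
  qed
  also have "\<dots> = Uc * \<epsilon>op * Oc * (\<Sum>\<rho>\<in>{\<rho>. length \<rho> = j}. polw \<pi> [] \<rho> * nx \<rho>)"
    by (simp add: sum_distrib_left mult_ac)
  also have "\<dots> \<le> Uc * \<epsilon>op * Oc * (real (UA_card H U) + err j)"
  proof (intro mult_left_mono)
    have "(\<Sum>\<rho>\<in>{\<rho>. length \<rho> = j}. polw \<pi> [] \<rho> * nx \<rho>) \<le>
      (\<Sum>\<rho>\<in>{\<rho>. length \<rho> = j}. polw \<pi> [] \<rho> * (\<Sum>u\<in>U (Suc j). \<bar>bs \<rho> u\<bar>) +
                                    polw \<pi> [] \<rho> * (\<Sum>u\<in>U (Suc j). \<bar>xs \<rho> u - bs \<rho> u\<bar>))"
    proof (rule sum_mono)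
      fix \<rho> :: "('o \<times> 'a) list" assume \<rho>: "\<rho> \<in> {\<rho>. length \<rho> = j}"
      have "nx \<rho> \<le> (\<Sum>u\<in>U (Suc j). \<bar>bs \<rho> u\<bar> + \<bar>xs \<rho> u - bs \<rho> u\<bar>)"
        unfolding nx_def by (intro sum_mono) linarith
      then show "polw \<pi> [] \<rho> * nx \<rho> \<le> polw \<pi> [] \<rho> * (\<Sum>u\<in>U (Suc j). \<bar>bs \<rho> u\<bar>) +
                                    polw \<pi> [] \<rho> * (\<Sum>u\<in>U (Suc j). \<bar>xs \<rho> u - bs \<rho> u\<bar>)"
        using \<rho> j by (simp add: sum.distrib distrib_left[symmetric] mult_left_mono polw_nonneg[OF policy])
    qed
    also have "\<dots> \<le> real (UA_card H U) + err j"
      unfolding sum.distrib err_def using bs_sum[of j] j by simp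
    finally show "(\<Sum>\<rho>\<in>{\<rho>. length \<rho> = j}. polw \<pi> [] \<rho> * nx \<rho>) \<le> real (UA_card H U) + err j" .
    show "0 \<le> Uc * \<epsilon>op * Oc" using eps_nonneg by (simp add: Uc_def Oc_def)
  qed
  finally show ?thesis by (simp add: Uc_def Oc_def)
qed

lemma err_final: "n \<le> H - 1 \<Longrightarrow> err n \<le> 3/4 * \<epsilon>1"
proof (induct n rule: less_induct)
  case (less n)
  define Uc where "Uc = real (U_card H U)"
  define Oc where "Oc = real (card (UNIV :: 'o set))"
  define UA where "UA = real (UA_card H U)"
  have Oc1: "1 \<le> Oc" unfolding Oc_def using card_gt_0_iff[of "UNIV :: 'o set"] by simp
  have UA1: "1 \<le> UA"
  proof -
    have "0 < UA_card H U" using eps1_pos eps1_le by (metis of_nat_0_less_iff order_less_le_trans)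
    then show ?thesis unfolding UA_def by simp
  qed
  have Uc1: "1 \<le> Uc"
  proof -
    obtain ob :: 'o where True by simp
    have "U H \<noteq> {}" using obs_in_UH by blast
    then have "1 \<le> card (U H)" using finU[of H] H_pos by (simp add: Suc_le_eq card_gt_0_iff)
    then show ?thesis using card_U_le[of H] H_pos unfolding Uc_def by simp
  qed
  have Hr: "1 \<le> real H" using H_pos by simp
  have Q: "(\<Sum>v\<in>U 1. \<bar>q0' v - test_prob f [] v\<bar>) \<le> Uc * \<epsilon>op"
  proof -
    have "(\<Sum>v\<in>U 1. \<bar>q0' v - test_prob f [] v\<bar>) \<le> (\<Sum>v\<in>U 1. \<epsilon>op)"
      using q_close by (intro sum_mono) (simp add: abs_minus_commute)
    also have "\<dots> = real (card (U 1)) * \<epsilon>op" by simp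
    also have "\<dots> \<le> Uc * \<epsilon>op" unfolding Uc_def using card_U_le[of 1] H_pos eps_nonneg
      by (intro mult_right_mono) auto
    finally show ?thesis .
  qed
  have terms: "(\<Sum>j<n. \<Sum>\<rho>\<in>{\<rho>. length \<rho> = Suc j}. polw \<pi> [] \<rho> *
           (\<Sum>v\<in>U (Suc (Suc j)). \<bar>Dz (Suc j) (fst (\<rho>!j)) (snd (\<rho>!j)) (xs (take j \<rho>)) v\<bar>))
        \<le> (\<Sum>j<n. Uc * \<epsilon>op * Oc * (2 * UA))"
  proof (rule sum_mono)
    fix j assume j: "j \<in> {..<n}"
    have "err j \<le> 3/4 * \<epsilon>1" using less j by auto
    then have ej: "UA + err j \<le> 2 * UA" using eps1_le eps1_pos unfolding UA_def by linarith
    have "(\<Sum>\<rho>\<in>{\<rho>. length \<rho> = Suc j}. polw \<pi> [] \<rho> *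
           (\<Sum>v\<in>U (Suc (Suc j)). \<bar>Dz (Suc j) (fst (\<rho>!j)) (snd (\<rho>!j)) (xs (take j \<rho>)) v\<bar>))
        \<le> Uc * \<epsilon>op * Oc * (UA + err j)"
      unfolding Uc_def Oc_def UA_def using j less.prems by (intro D_sum) auto
    also have "\<dots> \<le> Uc * \<epsilon>op * Oc * (2 * UA)"
      using ej Uc1 Oc1 eps_nonneg by (intro mult_left_mono) auto
    finally show "(\<Sum>\<rho>\<in>{\<rho>. length \<rho> = Suc j}. polw \<pi> [] \<rho> *
           (\<Sum>v\<in>U (Suc (Suc j)). \<bar>Dz (Suc j) (fst (\<rho>!j)) (snd (\<rho>!j)) (xs (take j \<rho>)) v\<bar>))
        \<le> Uc * \<epsilon>op * Oc * (2 * UA)" .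
  qed
  have CA0: "0 \<le> CA" using alpha_pos by simp
  have "err n \<le> CA * ((\<Sum>j<n. Uc * \<epsilon>op * Oc * (2 * UA)) + Uc * \<epsilon>op)"
    using err_bound1[OF less.prems] terms Q CA0
    by (smt (verit) mult_left_mono)
  also have "\<dots> = CA * (Uc * \<epsilon>op) * (2 * real n * Oc * UA + 1)"
    by (simp add: algebra_simps)
  also have "\<dots> \<le> CA * (Uc * \<epsilon>op) * (3 * real H * Oc * UA)"
  proof (intro mult_left_mono)
    have n: "real n + 1 \<le> real H" using less.prems H_pos by linarith
    have "2 * real n * Oc * UA + 1 \<le> 2 * real n * Oc * UA + Oc * UA"
      using Oc1 UA1 mult_mono[OF Oc1 UA1] by simp
    also have "\<dots> = (2 * real n + 1) * (Oc * UA)" by (simp add: algebra_simps)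
    also have "\<dots> \<le> (3 * real H) * (Oc * UA)"
      using n Oc1 UA1 by (intro mult_right_mono) auto
    finally show "2 * real n * Oc * UA + 1 \<le> 3 * real H * Oc * UA" by (simp add: mult_ac)
    show "0 \<le> CA * (Uc * \<epsilon>op)" using CA0 Uc1 eps_nonneg by (intro mult_nonneg_nonneg) auto
  qed
  also have "\<dots> = 3/4 * \<epsilon>1"
    unfolding eps_op Uc_def Oc_def UA_def[symmetric] using alpha_pos UA1 Uc1 Oc1 Hr
    by (simp add: field_simps power2_eq_square Uc_def Oc_def)
  finally show ?case .
qed

lemma final:
  "(\<Sum>\<tau>\<in>{\<tau> :: ('o,'a) hist. length \<tau> = H}.
      \<bar>traj_prob_param H U m' q0' \<pi> \<tau> - traj_prob f \<pi> \<tau>\<bar>) \<le> \<epsilon>1"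
proof -
  define K where "K = H - 1"
  have HK: "H = Suc K" using H_pos by (simp add: K_def)
  define E where "E \<rho> u = xs \<rho> u - bs \<rho> u" for \<rho> u
  have finUH: "finite (U H)" using finU H_pos by auto
  have g: "\<bar>traj_prob_param H U m' q0' \<pi> (\<rho>@[(ob,a)]) - traj_prob f \<pi> (\<rho>@[(ob,a)])\<bar> =
      \<bar>E \<rho> ([], ob)\<bar> * polw \<pi> [] \<rho> * \<pi> \<rho> ob a" if \<rho>: "length \<rho> = K" for \<rho> ob a
  proof -
    have t: "take K (\<rho>@[(ob,a)]) = \<rho>" "(\<rho>@[(ob,a)]) ! K = (ob,a)" using \<rho> by auto
    have p: "traj_prob_param H U m' q0' \<pi> (\<rho>@[(ob,a)]) = xs \<rho> ([], ob) * (polw \<pi> [] \<rho> * \<pi> \<rho> ob a)"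
      unfolding traj_prob_param_def K_def[symmetric] using \<rho> t
      by (simp add: pvec_app xs_def policy_prob_polw polw_snoc)
    have u: "([], ob) \<in> U (Suc (0 + length \<rho>))" using obs_in_UH \<rho> HK by simp
    have b: "bs \<rho> ([], ob) = reach_prob f \<rho> * f \<rho> ob"
      unfolding bs_def using app_tp[of "[]" 0 \<rho> "([], ob)"] u \<rho>
      by (simp add: K_def test_prob_def reach_prob_def)
    have q: "traj_prob f \<pi> (\<rho>@[(ob,a)]) = bs \<rho> ([], ob) * (polw \<pi> [] \<rho> * \<pi> \<rho> ob a)"
      unfolding traj_prob_def b by (simp add: reach_append obs_prod_Cons policy_prob_polw polw_snoc)
    have nn: "0 \<le> polw \<pi> [] \<rho> * \<pi> \<rho> ob a"
      using \<rho> HK policy by (intro mult_nonneg_nonneg polw_nonneg[OF policy]) (auto simp: valid_policy_def)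
    have "xs \<rho> ([], ob) * (polw \<pi> [] \<rho> * \<pi> \<rho> ob a) - bs \<rho> ([], ob) * (polw \<pi> [] \<rho> * \<pi> \<rho> ob a)
      = (xs \<rho> ([], ob) - bs \<rho> ([], ob)) * (polw \<pi> [] \<rho> * \<pi> \<rho> ob a)" by (simp add: left_diff_distrib)
    then show ?thesis unfolding p q E_def
      by (simp only: abs_mult[of "xs \<rho> ([], ob) - bs \<rho> ([], ob)"] abs_of_nonneg[OF nn] mult.assoc)
  qed
  have "(\<Sum>\<tau>\<in>{\<tau> :: ('o,'a) hist. length \<tau> = H}. \<bar>traj_prob_param H U m' q0' \<pi> \<tau> - traj_prob f \<pi> \<tau>\<bar>)
     = (\<Sum>\<rho>\<in>{\<rho>. length \<rho> = K}. \<Sum>ob\<in>UNIV. \<Sum>a\<in>UNIV. \<bar>E \<rho> ([], ob)\<bar> * polw \<pi> [] \<rho> * \<pi> \<rho> ob a)"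
  proof -
    have "{\<tau> :: ('o,'a) hist. length \<tau> = H} = {\<tau>. length \<tau> = Suc K}" using HK by simp
    then show ?thesis by (simp only: sum_len_Suc) (intro sum.cong refl, simp add: g)
  qed
  also have "\<dots> = (\<Sum>\<rho>\<in>{\<rho>. length \<rho> = K}. polw \<pi> [] \<rho> * (\<Sum>ob\<in>UNIV. \<bar>E \<rho> ([], ob)\<bar> * (\<Sum>a\<in>UNIV. \<pi> \<rho> ob a)))"
    by (simp add: sum_distrib_left sum_distrib_right mult_ac)
  also have "\<dots> = (\<Sum>\<rho>\<in>{\<rho>. length \<rho> = K}. polw \<pi> [] \<rho> * (\<Sum>ob\<in>UNIV. \<bar>E \<rho> ([], ob)\<bar>))"
  proof (intro sum.cong refl)
    fix \<rho> :: "('o \<times> 'a) list" assume "\<rho> \<in> {\<rho>. length \<rho> = K}"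
    then have "length \<rho> < H" using HK by simp
    then show "polw \<pi> [] \<rho> * (\<Sum>ob\<in>UNIV. \<bar>E \<rho> ([], ob)\<bar> * (\<Sum>a\<in>UNIV. \<pi> \<rho> ob a)) =
        polw \<pi> [] \<rho> * (\<Sum>ob\<in>UNIV. \<bar>E \<rho> ([], ob)\<bar>)"
      using policy by (simp add: valid_policy_def)
  qed
  also have "\<dots> \<le> (\<Sum>\<rho>\<in>{\<rho>. length \<rho> = K}. polw \<pi> [] \<rho> * (\<Sum>u\<in>U (Suc K). \<bar>E \<rho> u\<bar>))"
  proof (intro sum_mono mult_left_mono)
    fix \<rho> :: "('o \<times> 'a) list" assume \<rho>: "\<rho> \<in> {\<rho>. length \<rho> = K}"
    show "0 \<le> polw \<pi> [] \<rho>" using \<rho> HK by (intro polw_nonneg[OF policy]) auto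
    have inj: "inj (\<lambda>ob::'o. ([]::('o \<times> 'a) list, ob))" by (simp add: inj_on_def)
    have "(\<Sum>ob\<in>UNIV. \<bar>E \<rho> ([], ob)\<bar>) = (\<Sum>u\<in>(\<lambda>ob. ([], ob)) ` UNIV. \<bar>E \<rho> u\<bar>)"
      by (simp add: sum.reindex[OF inj])
    also have "\<dots> \<le> (\<Sum>u\<in>U (Suc K). \<bar>E \<rho> u\<bar>)"
      using obs_in_UH finUH HK by (intro sum_mono2) auto
    finally show "(\<Sum>ob\<in>UNIV. \<bar>E \<rho> ([], ob)\<bar>) \<le> (\<Sum>u\<in>U (Suc K). \<bar>E \<rho> u\<bar>)" .
  qed
  also have "\<dots> = err K" by (simp add: err_def E_def)
  also have "\<dots> \<le> 3/4 * \<epsilon>1" using err_final[of K] by (simp add: K_def)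
  also have "\<dots> \<le> \<epsilon>1" using eps1_pos by simp
  finally show ?thesis .
qed

end

theorem lemma17:
  fixes H :: nat
    and U :: "nat \<Rightarrow> ('o::finite, 'a::finite) test set"
    and f :: "('o,'a) hist \<Rightarrow> 'o \<Rightarrow> real"
    and \<alpha> \<epsilon>1 \<epsilon>op :: real
    and m m' :: "nat \<Rightarrow> 'o \<Rightarrow> 'a \<Rightarrow> ('o,'a) test \<Rightarrow> ('o,'a) test \<Rightarrow> real"
    and q0' :: "('o,'a) test \<Rightarrow> real"
    and \<pi> :: "('o,'a) hist \<Rightarrow> 'o \<Rightarrow> 'a \<Rightarrow> real"
  assumes H_pos: "1 \<le> H"
    and alpha_pos: "0 < \<alpha>"
    and psr: "valid_psr H U f"
    and core_bd: "core_bound H U f \<alpha>"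
    and obs_in_UH: "\<forall>ob. ([], ob) \<in> U H"
    and m_core: "\<forall>h\<in>{1..H - 1}. \<forall>ob a. \<forall>u\<in>U (Suc h). \<forall>\<tau>. length \<tau> = h - 1 \<longrightarrow>
                   test_prob f \<tau> ((ob, a) # fst u, snd u) = (\<Sum>v\<in>U h. m h ob a u v * test_prob f \<tau> v)"
    and m_span: "\<forall>h\<in>{1..H - 1}. \<forall>ob a. \<forall>u\<in>U (Suc h). \<exists>c. \<forall>v\<in>U h.
                   m h ob a u v = (\<Sum>\<tau>\<in>{\<tau>. length \<tau> = h - 1}. c \<tau> * test_prob f \<tau> v)"
    and eps1_pos: "0 < \<epsilon>1"
    and eps1_le: "\<epsilon>1 \<le> real (UA_card H U)"
    and eps_op: "\<epsilon>op = \<alpha> * \<epsilon>1 /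
                   (4 * real H * real (UA_card H U) ^ 2 * real (U_card H U) * real (card (UNIV :: 'o set)))"
    and m_close: "\<forall>h\<in>{1..H - 1}. \<forall>ob a. \<forall>u\<in>U (Suc h). \<forall>v\<in>U h. \<bar>m h ob a u v - m' h ob a u v\<bar> \<le> \<epsilon>op"
    and q_close: "\<forall>u\<in>U 1. \<bar>test_prob f [] u - q0' u\<bar> \<le> \<epsilon>op"
    and policy: "valid_policy H \<pi>"
  shows "(\<Sum>\<tau>\<in>{\<tau> :: ('o,'a) hist. length \<tau> = H}.
            \<bar>traj_prob_param H U m' q0' \<pi> \<tau> - traj_prob f \<pi> \<tau>\<bar>) \<le> \<epsilon>1"
proof -
  interpret PSRL2 H U f \<alpha> m \<pi> m' q0' \<epsilon>1 \<epsilon>op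
    by unfold_locales (use assms in auto)
  show ?thesis by (rule final)
qed

end
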